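(* Let $a>0$, $\psi_a(x)=\operatorname{sech}(ax)$, and let $f=\sum_{k\in\mathbb{Z}}c_k\psi_a(\cdot-k)$ with $c\in\ell^\infty(\mathbb{Z})$, $f\not\equiv0$. Let $N_f$ be the set of real zeros of $f$ with multiplicities $m_f$. Then $D^-(N_f,m_f)\le1$.
   Context: The multiplicity $m_f(x)$ of a real zero $x$ is the order of vanishing of $f$ at $x$. $D^-(N,m)=\liminf_{r\to\infty}\inf_{x\in\mathbb{R}}\frac{1}{2r}\sum_{\lambda\in N\cap[x-r,x+r]}m(\lambda)$. *)

theory Defs
  imports "HOL-Analysis.Analysis"
begin

definition sech_kernel :: "real \<Rightarrow> real \<Rightarrow> real" where
  "sech_kernel a x = 1 / cosh (a * x)"

definition zero_mult :: "(real \<Rightarrow> complex) \<Rightarrow> real \<Rightarrow> nat" where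
  "zero_mult f x = (THE n. \<exists>L. L \<noteq> 0 \<and>
      ((\<lambda>y. f y / (complex_of_real (y - x)) ^ n) \<longlongrightarrow> L) (at x))"

definition lower_density :: "real set \<Rightarrow> (real \<Rightarrow> nat) \<Rightarrow> ereal" where
  "lower_density N m = Liminf at_top (\<lambda>r::real.
      INF x::real. ereal ((\<Sum>z\<in>N \<inter> {x - r..x + r}. real (m z)) / (2 * r)))"

end

theory Submission
  imports Defs "HOL-Complex_Analysis.Complex_Analysis"
begin

lemma geo_int_summable:
  fixes a :: real assumes a: "a > 0"
  shows "(\<lambda>k::int. exp (- a * \<bar>real_of_int k\<bar>)) summable_on UNIV"
proof -
  have gs: "summable (\<lambda>n::nat. exp (- a) ^ n)"
    using a by (intro summable_geometric) auto
  have e: "exp (- a * real n) = exp (- a) ^ n" for n :: nat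
    by (simp add: exp_of_nat_mult[symmetric] mult.commute)
  have ee: "(\<lambda>n::nat. exp (- a * real n)) = (\<lambda>n. exp (- a) ^ n)"
    using e by auto
  have s1: "(\<lambda>n::nat. exp (- a * real n)) summable_on UNIV"
    unfolding ee using gs by (intro summable_nonneg_imp_summable_on) auto
  have s2: "(\<lambda>n::nat. exp (- a * (real n + 1))) summable_on UNIV"
  proof -
    have "summable (\<lambda>n::nat. exp (-a) * exp (- a) ^ n)"
      using gs by (rule summable_mult)
    moreover have "exp (- a * (real n + 1)) = exp (-a) * exp (- a) ^ n" for n :: nat
      by (simp add: e[symmetric] exp_add[symmetric] algebra_simps)
    ultimately have "summable (\<lambda>n::nat. exp (- a * (real n + 1)))"
      by presburger
    then show ?thesis
      by (intro summable_nonneg_imp_summable_on) auto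
  qed
  let ?g = "\<lambda>k::int. exp (- a * \<bar>real_of_int k\<bar>)"
  have A: "?g summable_on (int ` UNIV)"
    by (subst summable_on_reindex) (use s1 in \<open>auto simp: o_def\<close>)
  have B: "?g summable_on ((\<lambda>n. - int n - 1) ` UNIV)"
  proof (subst summable_on_reindex)
    show "inj_on (\<lambda>n. - int n - 1) UNIV" by (auto simp: inj_on_def)
    have "(?g \<circ> (\<lambda>n. - int n - 1)) = (\<lambda>n::nat. exp (- a * (real n + 1)))"
      by (auto simp: o_def)
    then show "(?g \<circ> (\<lambda>n. - int n - 1)) summable_on UNIV" using s2 by simp
  qed
  have U: "UNIV = int ` UNIV \<union> (\<lambda>n. - int n - 1) ` UNIV"
  proof -
    have "k \<in> int ` UNIV \<union> (\<lambda>n. - int n - 1) ` UNIV" for k :: int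
    proof (cases "k \<ge> 0")
      case True then show ?thesis by (metis UnI1 nonneg_int_cases rangeI)
    next
      case False
      then have "k = - int (nat (- k - 1)) - 1" by simp
      then show ?thesis by blast
    qed
    then show ?thesis by blast
  qed
  show ?thesis
    by (subst U, rule summable_on_Un_disjoint[OF A B]) auto
qed

lemma geo_int_shift:
  fixes a :: real and m :: int
  shows "(\<Sum>\<^sub>\<infinity>k. exp (- a * \<bar>real_of_int k - real_of_int m\<bar>)) = (\<Sum>\<^sub>\<infinity>k::int. exp (- a * \<bar>real_of_int k\<bar>))"
proof -
  have "bij_betw (\<lambda>k. k + m) UNIV (UNIV::int set)"
    by (rule bij_betwI[of _ _ _ "\<lambda>k. k - m"]) auto
  from infsum_reindex_bij_betw[OF this, of "\<lambda>k. exp (- a * \<bar>real_of_int k - real_of_int m\<bar>)"]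
  show ?thesis by simp
qed

lemma geo_int_shift_summable:
  fixes a :: real and m :: int assumes a: "a > 0"
  shows "(\<lambda>k. exp (- a * \<bar>real_of_int k - real_of_int m\<bar>)) summable_on UNIV"
proof -
  have "bij_betw (\<lambda>k. k + m) UNIV (UNIV::int set)"
    by (rule bij_betwI[of _ _ _ "\<lambda>k. k - m"]) auto
  from summable_on_reindex_bij_betw[OF this, of "\<lambda>k. exp (- a * \<bar>real_of_int k - real_of_int m\<bar>)"]
  show ?thesis using geo_int_summable[OF a] by simp
qed

lemma holo_infsum:
  fixes u :: "'i \<Rightarrow> complex \<Rightarrow> complex"
  assumes U: "open U"
    and loc: "\<And>w. w \<in> U \<Longrightarrow> \<exists>r>0. cball w r \<subseteq> U \<and>
               (\<exists>M. M summable_on X \<and> (\<forall>k\<in>X. \<forall>t\<in>cball w r. norm (u k t) \<le> M k))"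
    and hol: "\<And>k. k \<in> X \<Longrightarrow> u k holomorphic_on U"
  shows "(\<lambda>t. \<Sum>\<^sub>\<infinity>k\<in>X. u k t) holomorphic_on U"
proof -
  have "(\<lambda>t. \<Sum>\<^sub>\<infinity>k\<in>X. u k t) field_differentiable (at w)" if w: "w \<in> U" for w
  proof -
    obtain r M where r: "r > 0" "cball w r \<subseteq> U" and M: "M summable_on X"
      and bd: "\<And>k t. k \<in> X \<Longrightarrow> t \<in> cball w r \<Longrightarrow> norm (u k t) \<le> M k"
      using loc[OF w] by blast
    have ul: "uniform_limit (cball w r) (\<lambda>Y t. \<Sum>k\<in>Y. u k t) (\<lambda>t. \<Sum>\<^sub>\<infinity>k\<in>X. u k t) (finite_subsets_at_top X)"
      by (rule Weierstrass_m_test_general[OF bd M])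
    have ev: "\<forall>\<^sub>F Y in finite_subsets_at_top X. continuous_on (cball w r) (\<lambda>t. \<Sum>k\<in>Y. u k t) \<and>
               (\<lambda>t. \<Sum>k\<in>Y. u k t) holomorphic_on ball w r"
    proof (rule eventually_finite_subsets_at_top_weakI)
      fix Y assume Y: "finite Y" "Y \<subseteq> X"
      have h: "(\<lambda>t. \<Sum>k\<in>Y. u k t) holomorphic_on U"
        using Y hol by (intro holomorphic_on_sum) auto
      show "continuous_on (cball w r) (\<lambda>t. \<Sum>k\<in>Y. u k t) \<and> (\<lambda>t. \<Sum>k\<in>Y. u k t) holomorphic_on ball w r"
        using h r by (meson ball_subset_cball holomorphic_on_imp_continuous_on holomorphic_on_subset subset_trans)
    qed
    obtain "(\<lambda>t. \<Sum>\<^sub>\<infinity>k\<in>X. u k t) holomorphic_on ball w r"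
      using holomorphic_uniform_limit[OF ev ul] by auto
    then show ?thesis
      using r holomorphic_on_imp_differentiable_at by auto
  qed
  then show ?thesis
    using U holomorphic_on_open field_differentiable_def by blast
qed

definition pk :: "real \<Rightarrow> int \<Rightarrow> real" where "pk a k = exp (2 * a * of_int k)"
definition bk :: "real \<Rightarrow> (int \<Rightarrow> complex) \<Rightarrow> int \<Rightarrow> complex" where "bk a c k = c k * complex_of_real (exp (a * of_int k))"
definition FF :: "real \<Rightarrow> (int \<Rightarrow> complex) \<Rightarrow> complex \<Rightarrow> complex" where
  "FF a c t = (\<Sum>\<^sub>\<infinity>k. bk a c k / (t + complex_of_real (pk a k)))"

lemma pk_pos: "pk a k > 0" by (simp add: pk_def)

context
  fixes a :: real and c :: "int \<Rightarrow> complex" and B :: real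
  assumes a_pos: "a > 0" and B_nonneg: "B \<ge> 0" and c_bd: "\<And>k. norm (c k) \<le> B"
begin

lemma norm_bk: "norm (bk a c k) \<le> B * exp (a * of_int k)"
  unfolding bk_def norm_mult using c_bd[of k] by (simp add: mult_right_mono)

lemma term_bound_re:
  assumes rho: "rho > 0" "Re t \<ge> rho"
  shows "norm (bk a c k / (t + complex_of_real (pk a k))) \<le> B * max 1 (1/rho) * exp (- a * \<bar>of_int k\<bar>)"
proof -
  have n1: "norm (t + complex_of_real (pk a k)) \<ge> Re t + pk a k"
    using complex_Re_le_cmod[of "t + complex_of_real (pk a k)"] by simp
  have pos: "Re t + pk a k > 0" using rho pk_pos[of a k] by linarith
  have "norm (bk a c k / (t + complex_of_real (pk a k))) = norm (bk a c k) / norm (t + complex_of_real (pk a k))"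
    by (simp add: norm_divide)
  also have "\<dots> \<le> B * exp (a * of_int k) / (Re t + pk a k)"
    using norm_bk[of k] n1 pos B_nonneg by (intro frac_le) auto
  also have "\<dots> \<le> B * max 1 (1/rho) * exp (- a * \<bar>of_int k\<bar>)"
  proof (cases "k \<ge> 0")
    case True
    have "B * exp (a * of_int k) / (Re t + pk a k) \<le> B * exp (a * of_int k) / pk a k"
      using pos rho pk_pos[of a k] B_nonneg by (intro divide_left_mono) auto
    also have "\<dots> = B * exp (- a * \<bar>of_int k\<bar>)"
      using True by (simp add: pk_def exp_diff[symmetric] exp_minus field_simps flip: exp_add)
    also have "\<dots> \<le> B * max 1 (1/rho) * exp (- a * \<bar>of_int k\<bar>)"
    proof -
      have "B \<le> B * max 1 (1/rho)" using B_nonneg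
        by (metis max.cobounded1 mult.right_neutral mult_left_mono)
      then show ?thesis by (intro mult_right_mono) auto
    qed
    finally show ?thesis .
  next
    case False
    have "B * exp (a * of_int k) / (Re t + pk a k) \<le> B * exp (a * of_int k) / rho"
      using pos rho pk_pos[of a k] B_nonneg by (intro divide_left_mono) auto
    also have "\<dots> = B * (1/rho) * exp (- a * \<bar>of_int k\<bar>)"
      using False by simp
    also have "\<dots> \<le> B * max 1 (1/rho) * exp (- a * \<bar>of_int k\<bar>)"
      using B_nonneg by (intro mult_right_mono mult_left_mono) auto
    finally show ?thesis .
  qed
  finally show ?thesis .
qed

lemma FF_holo: "FF a c holomorphic_on {t. Re t > 0}"
proof -
  have "(\<lambda>t. \<Sum>\<^sub>\<infinity>k\<in>UNIV. bk a c k / (t + complex_of_real (pk a k))) holomorphic_on {t. Re t > 0}"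
  proof (rule holo_infsum)
    show "open {t. Re t > 0}" by (simp add: open_halfspace_Re_gt)
  next
    fix w :: complex assume w: "w \<in> {t. Re t > 0}"
    define r where "r = Re w / 2"
    have r: "r > 0" using w by (simp add: r_def)
    have sub: "cball w r \<subseteq> {t. Re t > 0}"
    proof
      fix t assume "t \<in> cball w r"
      then have "norm (w - t) \<le> r" by (simp add: dist_norm)
      moreover have "Re w - Re t \<le> norm (w - t)" using complex_Re_le_cmod[of "w - t"] by simp
      ultimately show "t \<in> {t. Re t > 0}" using r by (simp add: r_def)
    qed
    have bd: "\<forall>k\<in>UNIV. \<forall>t\<in>cball w r. norm (bk a c k / (t + complex_of_real (pk a k))) \<le> B * max 1 (1/r) * exp (- a * \<bar>of_int k\<bar>)"
    proof (intro ballI)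
      fix k t assume "t \<in> cball w r"
      then have "norm (w - t) \<le> r" by (simp add: dist_norm)
      moreover have "Re w - Re t \<le> norm (w - t)" using complex_Re_le_cmod[of "w - t"] by simp
      ultimately have "Re t \<ge> r" by (simp add: r_def)
      then show "norm (bk a c k / (t + complex_of_real (pk a k))) \<le> B * max 1 (1/r) * exp (- a * \<bar>of_int k\<bar>)"
        using term_bound_re r by blast
    qed
    have "(\<lambda>k::int. B * max 1 (1/r) * exp (- a * \<bar>of_int k\<bar>)) summable_on UNIV"
      using geo_int_summable[OF a_pos] by (rule summable_on_cmult_right)
    then show "\<exists>r>0. cball w r \<subseteq> {t. Re t > 0} \<and> (\<exists>M. M summable_on UNIV \<and>
          (\<forall>k\<in>UNIV. \<forall>t\<in>cball w r. norm (bk a c k / (t + complex_of_real (pk a k))) \<le> M k))"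
      using r sub bd by blast
  next
    fix k :: int
    show "(\<lambda>t. bk a c k / (t + complex_of_real (pk a k))) holomorphic_on {t. Re t > 0}"
    proof (intro holomorphic_intros)
      fix t :: complex assume "t \<in> {t. Re t > 0}"
      then have "Re (t + complex_of_real (pk a k)) > 0" using pk_pos[of a k] by simp
      then show "t + complex_of_real (pk a k) \<noteq> 0" by (metis less_irrefl zero_complex.sel(1))
    qed
  qed
  then show ?thesis unfolding FF_def by simp
qed

end

lemma sech_identity:
  fixes a x k :: real
  shows "sech_kernel a (x - k) = 2 * exp (a * x) * exp (a * k) / (exp (2 * a * x) + exp (2 * a * k))"
proof -
  have c: "cosh (a * (x - k)) = (exp (a * (x - k)) + exp (- (a * (x - k)))) / 2"
    by (simp add: cosh_def scaleR_conv_of_real)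
  have e1: "exp (a * (x - k)) * (exp (a * x) * exp (a * k)) = exp (2 * a * x)"
  proof -
    have "exp (a * (x - k)) * (exp (a * x) * exp (a * k)) = exp (a * (x - k) + a * x + a * k)"
      by (simp add: exp_add)
    also have "a * (x - k) + a * x + a * k = 2 * a * x" by (simp add: algebra_simps)
    finally show ?thesis .
  qed
  have e2: "exp (- (a * (x - k))) * (exp (a * x) * exp (a * k)) = exp (2 * a * k)"
  proof -
    have "exp (- (a * (x - k))) * (exp (a * x) * exp (a * k)) = exp (- (a * (x - k)) + a * x + a * k)"
      by (simp only: exp_add mult.assoc)
    also have "- (a * (x - k)) + a * x + a * k = 2 * a * k" by (simp add: algebra_simps)
    finally show ?thesis .
  qed
  have pos: "exp (a * x) * exp (a * k) > 0" by simp
  have "sech_kernel a (x - k) = 2 / (exp (a * (x - k)) + exp (- (a * (x - k))))"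
    by (simp add: sech_kernel_def c)
  also have "\<dots> = 2 * (exp (a * x) * exp (a * k)) / ((exp (a * (x - k)) + exp (- (a * (x - k)))) * (exp (a * x) * exp (a * k)))"
    by (subst mult_divide_mult_cancel_right) (use pos in auto)
  also have "\<dots> = 2 * exp (a * x) * exp (a * k) / (exp (2 * a * x) + exp (2 * a * k))"
    by (simp only: distrib_right e1 e2 mult.assoc)
  finally show ?thesis .
qed

lemma summable_bound:
  fixes u :: "'i \<Rightarrow> complex" and g :: "'i \<Rightarrow> real"
  assumes "g summable_on A" "\<And>k. k \<in> A \<Longrightarrow> norm (u k) \<le> g k"
  shows "u summable_on A" "norm (infsum u A) \<le> infsum g A"
proof -
  have "(\<lambda>k. norm (u k)) summable_on A"
    by (rule Infinite_Sum.abs_summable_on_comparison_test'[OF assms])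
  then show us: "u summable_on A" by (rule abs_summable_summable)
  show "norm (infsum u A) \<le> infsum g A"
    using norm_infsum_le[OF has_sum_infsum[OF us] has_sum_infsum[OF assms(1)]] assms(2) by blast
qed

context
  fixes a :: real and c :: "int \<Rightarrow> complex" and B :: real
  assumes a_pos: "a > 0" and B_nonneg: "B \<ge> 0" and c_bd: "\<And>k. norm (c k) \<le> B"
begin

lemma f_eq_FF:
  assumes "\<And>x. f x = (\<Sum>\<^sub>\<infinity>k\<in>(UNIV::int set). c k * complex_of_real (sech_kernel a (x - of_int k)))"
  shows "f x = 2 * complex_of_real (exp (a * x)) * FF a c (complex_of_real (exp (2 * a * x)))"
proof -
  have "c k * complex_of_real (sech_kernel a (x - of_int k)) =
        2 * complex_of_real (exp (a * x)) * (bk a c k / (complex_of_real (exp (2 * a * x)) + complex_of_real (pk a k)))" for k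
  proof -
    have "c k * complex_of_real (sech_kernel a (x - of_int k)) =
       c k * complex_of_real (2 * exp (a * x) * exp (a * k) / (exp (2 * a * x) + exp (2 * a * k)))"
      by (simp add: sech_identity)
    also have "\<dots> = 2 * complex_of_real (exp (a * x)) * (bk a c k / (complex_of_real (exp (2 * a * x)) + complex_of_real (pk a k)))"
      by (simp add: bk_def pk_def mult_ac)
    finally show ?thesis .
  qed
  then have "f x = (\<Sum>\<^sub>\<infinity>k. 2 * complex_of_real (exp (a * x)) * (bk a c k / (complex_of_real (exp (2 * a * x)) + complex_of_real (pk a k))))"
    using assms by simp
  also have "\<dots> = 2 * complex_of_real (exp (a * x)) * FF a c (complex_of_real (exp (2 * a * x)))"
    unfolding FF_def by (rule infsum_cmult_right')
  finally show ?thesis .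
qed

lemma term_bound_gap:
  assumes th: "0 \<le> th" "th < 1"
    and gap: "norm t \<le> th * pk a k \<or> pk a k \<le> th * norm t"
  shows "norm (bk a c k / (t + complex_of_real (pk a k))) \<le> B * exp (a * of_int k) / ((1 - th) * max (norm t) (pk a k))"
proof -
  have pp: "pk a k > 0" by (simp add: pk_def)
  have low: "norm (t + complex_of_real (pk a k)) \<ge> (1 - th) * max (norm t) (pk a k)"
  proof -
    have tri: "norm (t + complex_of_real (pk a k)) \<ge> \<bar>norm t - pk a k\<bar>"
    proof -
      have "norm (complex_of_real (pk a k)) = pk a k" using pp by simp
      moreover have "norm (t + complex_of_real (pk a k)) \<ge> norm t - norm (complex_of_real (pk a k))"
        by (metis add_diff_cancel norm_diff_ineq)
      moreover have "norm (t + complex_of_real (pk a k)) \<ge> norm (complex_of_real (pk a k)) - norm t"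
        by (metis add.commute norm_diff_ineq)
      ultimately show ?thesis by linarith
    qed
    from gap show ?thesis
    proof
      assume "norm t \<le> th * pk a k"
      moreover have "th * pk a k \<le> pk a k" using th pp by (simp add: mult_left_le_one_le)
      ultimately have "\<bar>norm t - pk a k\<bar> \<ge> (1 - th) * pk a k" "norm t \<le> pk a k"
        by (auto simp: left_diff_distrib)
      then show ?thesis using tri by (simp add: max_def)
    next
      assume "pk a k \<le> th * norm t"
      moreover have "th * norm t \<le> norm t" using th by (simp add: mult_left_le_one_le)
      ultimately have "\<bar>norm t - pk a k\<bar> \<ge> (1 - th) * norm t" "pk a k \<le> norm t"
        by (auto simp: left_diff_distrib)
      then show ?thesis using tri by (simp add: max_def)
    qed
  qed
  have "max (norm t) (pk a k) > 0" using pp by (simp add: less_max_iff_disj)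
  then have mpos: "(1 - th) * max (norm t) (pk a k) > 0" using th by simp
  have "norm (bk a c k / (t + complex_of_real (pk a k))) = norm (bk a c k) / norm (t + complex_of_real (pk a k))"
    by (simp add: norm_divide)
  also have "\<dots> \<le> B * exp (a * of_int k) / ((1 - th) * max (norm t) (pk a k))"
    using norm_bk[OF a_pos B_nonneg c_bd, where k=k] low mpos B_nonneg by (intro frac_le) auto
  finally show ?thesis .
qed

end

lemma limit_order_lt_False:
  fixes \<phi> :: "real \<Rightarrow> complex" and \<xi> :: real
  assumes l1: "((\<lambda>y. \<phi> y / complex_of_real (y - \<xi>) ^ m1) \<longlongrightarrow> L1) (at \<xi>)" and L1: "L1 \<noteq> 0"
    and l2: "((\<lambda>y. \<phi> y / complex_of_real (y - \<xi>) ^ m2) \<longlongrightarrow> L2) (at \<xi>)" and lt: "m1 < m2"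
  shows False
proof -
  have z: "((\<lambda>y. complex_of_real (y - \<xi>) ^ (m2 - m1)) \<longlongrightarrow> 0) (at \<xi>)"
  proof -
    have "((\<lambda>y. complex_of_real (y - \<xi>)) \<longlongrightarrow> complex_of_real (\<xi> - \<xi>)) (at \<xi>)"
      by (intro tendsto_intros)
    then have "((\<lambda>y. complex_of_real (y - \<xi>) ^ (m2 - m1)) \<longlongrightarrow> complex_of_real (\<xi> - \<xi>) ^ (m2 - m1)) (at \<xi>)"
      by (intro tendsto_intros)
    moreover have "(0::complex) ^ (m2 - m1) = 0" using lt by simp
    ultimately show ?thesis by simp
  qed
  have "((\<lambda>y. complex_of_real (y - \<xi>) ^ (m2 - m1) * (\<phi> y / complex_of_real (y - \<xi>) ^ m2)) \<longlongrightarrow> 0 * L2) (at \<xi>)"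
    by (rule tendsto_mult[OF z l2])
  moreover have "\<forall>\<^sub>F y in at \<xi>. complex_of_real (y - \<xi>) ^ (m2 - m1) * (\<phi> y / complex_of_real (y - \<xi>) ^ m2) =
      \<phi> y / complex_of_real (y - \<xi>) ^ m1"
  proof -
    have "\<forall>\<^sub>F y in at \<xi>. y \<noteq> \<xi>" by (simp add: eventually_at_filter)
    then show ?thesis
    proof eventually_elim
    case (elim y)
    then have "y \<noteq> \<xi>" by simp
    then have nz: "complex_of_real (y - \<xi>) \<noteq> 0" by simp
    have "complex_of_real (y - \<xi>) ^ m2 = complex_of_real (y - \<xi>) ^ (m2 - m1) * complex_of_real (y - \<xi>) ^ m1"
      using lt by (simp add: power_add[symmetric])
    then show "complex_of_real (y - \<xi>) ^ (m2 - m1) * (\<phi> y / complex_of_real (y - \<xi>) ^ m2) =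
      \<phi> y / complex_of_real (y - \<xi>) ^ m1"
      using nz by (simp add: field_simps)
    qed
  qed
  ultimately have "((\<lambda>y. \<phi> y / complex_of_real (y - \<xi>) ^ m1) \<longlongrightarrow> 0) (at \<xi>)"
    using Lim_transform_eventually by fastforce
  with l1 have "L1 = 0" using tendsto_unique by (metis trivial_limit_at)
  with L1 show False by simp
qed

lemma zero_mult_the:
  fixes \<phi> :: "real \<Rightarrow> complex"
  assumes l: "((\<lambda>y. \<phi> y / complex_of_real (y - \<xi>) ^ n) \<longlongrightarrow> L) (at \<xi>)" and L: "L \<noteq> 0"
  shows "zero_mult \<phi> \<xi> = n"
  unfolding zero_mult_def
proof (rule the_equality)
  show "\<exists>L. L \<noteq> 0 \<and> ((\<lambda>y. \<phi> y / complex_of_real (y - \<xi>) ^ n) \<longlongrightarrow> L) (at \<xi>)" using l L by blast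
next
  fix m assume "\<exists>L. L \<noteq> 0 \<and> ((\<lambda>y. \<phi> y / complex_of_real (y - \<xi>) ^ m) \<longlongrightarrow> L) (at \<xi>)"
  then obtain L' where L': "L' \<noteq> 0" "((\<lambda>y. \<phi> y / complex_of_real (y - \<xi>) ^ m) \<longlongrightarrow> L') (at \<xi>)" by blast
  show "m = n"
  proof (rule linorder_cases[of m n])
    assume "m < n" then show ?thesis using limit_order_lt_False[OF L'(2) L'(1) l] by blast
  next
    assume "n < m" then show ?thesis using limit_order_lt_False[OF l L L'(2)] by blast
  qed
qed

context
  fixes a :: real and c :: "int \<Rightarrow> complex" and B :: real and f :: "real \<Rightarrow> complex"
  assumes a_pos: "a > 0" and B_nonneg: "B \<ge> 0" and c_bd: "\<And>k. norm (c k) \<le> B"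
    and f_eq: "\<And>x. f x = 2 * complex_of_real (exp (a * x)) * FF a c (complex_of_real (exp (2 * a * x)))"
    and f_nz: "\<exists>x. f x \<noteq> 0"
begin

lemma zero_factor:
  fixes \<xi> :: real
  defines "\<tau> \<equiv> complex_of_real (exp (2 * a * \<xi>))"
  obtains r g where "r > 0" "cball \<tau> r \<subseteq> {t. Re t > 0}" "g holomorphic_on cball \<tau> r"
    "\<And>w. w \<in> cball \<tau> r \<Longrightarrow> FF a c w = g w * (w - \<tau>) ^ zero_mult f \<xi> \<and> g w \<noteq> 0"
proof -
  let ?S = "{t. Re t > 0}"
  have hol: "FF a c holomorphic_on ?S" by (rule FF_holo[OF a_pos B_nonneg c_bd])
  have tS: "\<tau> \<in> ?S" by (simp add: \<tau>_def)
  obtain x0 where x0: "f x0 \<noteq> 0" using f_nz by blast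
  have ne: "\<exists>w\<in>?S. FF a c w \<noteq> 0"
    using x0 f_eq[of x0] by (intro bexI[of _ "complex_of_real (exp (2 * a * x0))"]) auto
  define n where "n = zorder (FF a c) \<tau>"
  define g where "g = zor_poly (FF a c) \<tau>"
  from zorder_exist_zero[OF hol open_halfspace_Re_gt connected_halfspace_Re_gt tS ne]
  obtain r where r: "r > 0" "cball \<tau> r \<subseteq> ?S" "g holomorphic_on cball \<tau> r"
    and fac: "\<And>w. w \<in> cball \<tau> r \<Longrightarrow> FF a c w = g w * (w - \<tau>) ^ nat n \<and> g w \<noteq> 0"
    unfolding n_def g_def by blast
  define E where "E = (\<lambda>y::real. complex_of_real (exp (2 * a * y)))"
  have Eq: "E \<xi> = \<tau>" by (simp add: E_def \<tau>_def)
  have Elim: "(E \<longlongrightarrow> \<tau>) (at \<xi>)"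
  proof -
    have "isCont E \<xi>" unfolding E_def by (intro continuous_intros)
    then show ?thesis using Eq by (simp add: isCont_def)
  qed
  have gc: "isCont g \<tau>"
  proof -
    have "continuous_on (cball \<tau> r) g" using r(3) by (rule holomorphic_on_imp_continuous_on)
    moreover have "\<tau> \<in> interior (cball \<tau> r)" using r(1) by simp
    ultimately show ?thesis using continuous_on_interior by blast
  qed
  have gE: "((\<lambda>y. g (E y)) \<longlongrightarrow> g \<tau>) (at \<xi>)"
    using isCont_tendsto_compose[OF gc Elim] .
  have dq: "((\<lambda>y. (E y - \<tau>) / complex_of_real (y - \<xi>)) \<longlongrightarrow> complex_of_real (2 * a * exp (2 * a * \<xi>))) (at \<xi>)"
  proof -
    have "((\<lambda>y. exp (2 * a * y)) has_field_derivative (exp (2 * a * \<xi>) * (2 * a))) (at \<xi>)"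
      by (auto intro!: derivative_eq_intros)
    then have "((\<lambda>y. (exp (2 * a * y) - exp (2 * a * \<xi>)) / (y - \<xi>)) \<longlongrightarrow> exp (2 * a * \<xi>) * (2 * a)) (at \<xi>)"
      by (simp add: has_field_derivative_iff)
    then have "((\<lambda>y. complex_of_real ((exp (2 * a * y) - exp (2 * a * \<xi>)) / (y - \<xi>))) \<longlongrightarrow> complex_of_real (exp (2 * a * \<xi>) * (2 * a))) (at \<xi>)"
      by (rule tendsto_of_real)
    then show ?thesis by (simp add: E_def \<tau>_def mult_ac)
  qed
  define L where "L = 2 * complex_of_real (exp (a * \<xi>)) * g \<tau> * complex_of_real (2 * a * exp (2 * a * \<xi>)) ^ nat n"
  have Lnz: "L \<noteq> 0"
    using fac[of \<tau>] r(1) a_pos by (simp add: L_def)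
  have lim1: "((\<lambda>y. 2 * complex_of_real (exp (a * y)) * g (E y) * ((E y - \<tau>) / complex_of_real (y - \<xi>)) ^ nat n) \<longlongrightarrow> L) (at \<xi>)"
    unfolding L_def by (intro tendsto_intros gE dq)
  have ev: "\<forall>\<^sub>F y in at \<xi>. E y \<in> cball \<tau> r"
  proof -
    have "\<forall>\<^sub>F y in at \<xi>. dist (E y) \<tau> < r" using tendstoD[OF Elim r(1)] .
    then show ?thesis by eventually_elim (simp add: dist_commute)
  qed
  have ev2: "\<forall>\<^sub>F y in at \<xi>. 2 * complex_of_real (exp (a * y)) * g (E y) * ((E y - \<tau>) / complex_of_real (y - \<xi>)) ^ nat n
      = f y / complex_of_real (y - \<xi>) ^ nat n"
  proof -
    have "\<forall>\<^sub>F y in at \<xi>. y \<noteq> \<xi>" by (simp add: eventually_at_filter)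
    with ev show ?thesis
    proof eventually_elim
      case (elim y)
      then have nz: "complex_of_real (y - \<xi>) \<noteq> 0" by simp
      have "f y = 2 * complex_of_real (exp (a * y)) * (g (E y) * (E y - \<tau>) ^ nat n)"
        using f_eq[of y] fac[of "E y"] elim by (simp add: E_def)
      then show ?case using nz by (simp add: power_divide)
    qed
  qed
  have "((\<lambda>y. f y / complex_of_real (y - \<xi>) ^ nat n) \<longlongrightarrow> L) (at \<xi>)"
    using Lim_transform_eventually[OF lim1 ev2] .
  then have zm: "zero_mult f \<xi> = nat n" using zero_mult_the Lnz by blast
  show ?thesis
    using that[OF r(1) r(2) r(3)] fac unfolding zm by blast
qed

end

lemma select_sub:
  fixes m :: "'a \<Rightarrow> nat"
  assumes "finite A" "K \<le> sum m A"
  shows "\<exists>\<mu>. (\<forall>x. \<mu> x \<le> m x) \<and> (\<forall>x. x \<notin> A \<longrightarrow> \<mu> x = 0) \<and> sum \<mu> A = K"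
  using assms
proof (induction A arbitrary: K rule: finite_induct)
  case empty
  then show ?case by (intro exI[of _ "\<lambda>_. 0"]) auto
next
  case (insert x F)
  show ?case
  proof (cases "K \<le> sum m F")
    case True
    then obtain \<mu> where \<mu>: "\<forall>x. \<mu> x \<le> m x" "\<forall>x. x \<notin> F \<longrightarrow> \<mu> x = 0" "sum \<mu> F = K"
      using insert.IH by blast
    then show ?thesis using insert.hyps by (intro exI[of _ \<mu>]) auto
  next
    case False
    define \<mu> where "\<mu> = (\<lambda>y. if y \<in> F then m y else if y = x then K - sum m F else 0)"
    have "sum \<mu> F = sum m F" unfolding \<mu>_def by (rule sum.cong) auto
    then have "sum \<mu> (insert x F) = K"
      using insert False by (simp add: \<mu>_def)
    moreover have "\<forall>y. \<mu> y \<le> m y"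
      using insert False by (auto simp: \<mu>_def)
    moreover have "\<forall>y. y \<notin> insert x F \<longrightarrow> \<mu> y = 0" by (auto simp: \<mu>_def)
    ultimately show ?thesis by blast
  qed
qed

lemma eventually_notin_finite:
  fixes K :: "'a::t1_space set"
  assumes "finite K"
  shows "\<forall>\<^sub>F w in at \<tau>. w \<notin> K"
  using islimpt_finite[OF assms] islimpt_iff_eventually by blast

lemma divide_zeros:
  fixes G :: "complex \<Rightarrow> complex" and K :: "complex set" and \<nu> :: "complex \<Rightarrow> nat"
  assumes \<Omega>: "open \<Omega>" and hol: "G holomorphic_on \<Omega>" and K: "finite K" "K \<subseteq> \<Omega>"
    and loc: "\<And>\<tau>. \<tau> \<in> K \<Longrightarrow> \<exists>r>0. \<exists>g. g holomorphic_on ball \<tau> r \<and> (\<forall>w\<in>ball \<tau> r. G w = g w * (w - \<tau>) ^ \<nu> \<tau>)"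
  shows "\<exists>h. h holomorphic_on \<Omega> \<and> (\<forall>w\<in>\<Omega> - K. G w = h w * (\<Prod>\<sigma>\<in>K. (w - \<sigma>) ^ \<nu> \<sigma>))"
proof -
  have "\<forall>\<tau>\<in>K. \<exists>r g. r > 0 \<and> g holomorphic_on ball \<tau> r \<and> (\<forall>w\<in>ball \<tau> r. G w = g w * (w - \<tau>) ^ \<nu> \<tau>)"
    using loc by blast
  then obtain R gg where Rg: "\<And>\<tau>. \<tau> \<in> K \<Longrightarrow> R \<tau> > 0 \<and> gg \<tau> holomorphic_on ball \<tau> (R \<tau>) \<and>
      (\<forall>w\<in>ball \<tau> (R \<tau>). G w = gg \<tau> w * (w - \<tau>) ^ \<nu> \<tau>)"
    by metis
  define Q where "Q = (\<lambda>w. \<Prod>\<sigma>\<in>K. (w - \<sigma>) ^ \<nu> \<sigma>)"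
  define QK where "QK = (\<lambda>\<tau> w. \<Prod>\<sigma>\<in>K - {\<tau>}. (w - \<sigma>) ^ \<nu> \<sigma>)"
  define h where "h = (\<lambda>w. if w \<in> K then gg w w / QK w w else G w / Q w)"
  have Qnz: "Q w \<noteq> 0" if "w \<notin> K" for w
    unfolding Q_def using K(1) that by (auto simp: prod_zero_iff)
  have QKnz: "QK \<tau> \<tau> \<noteq> 0" for \<tau>
    unfolding QK_def using K(1) by (auto simp: prod_zero_iff)
  have Qsplit: "Q w = (w - \<tau>) ^ \<nu> \<tau> * QK \<tau> w" if "\<tau> \<in> K" for \<tau> w
    unfolding Q_def QK_def using K(1) that by (simp add: prod.remove)
  have h1: "h holomorphic_on (\<Omega> - K)"
  proof (rule holomorphic_transform[of "\<lambda>w. G w / Q w"])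
    show "(\<lambda>w. G w / Q w) holomorphic_on \<Omega> - K"
      unfolding Q_def
      by (intro holomorphic_intros holomorphic_on_subset[OF hol]) (use Qnz[unfolded Q_def] in auto)
  qed (auto simp: h_def)
  have h2: "h holomorphic_on \<Omega>"
  proof (rule no_isolated_singularity'[OF _ h1 \<Omega> K(1)])
    fix \<tau> assume t: "\<tau> \<in> K"
    from Rg[OF t] have R: "R \<tau> > 0" and gh: "gg \<tau> holomorphic_on ball \<tau> (R \<tau>)"
      and gf: "\<forall>w\<in>ball \<tau> (R \<tau>). G w = gg \<tau> w * (w - \<tau>) ^ \<nu> \<tau>" by auto
    have gc: "isCont (gg \<tau>) \<tau>"
      using gh R holomorphic_on_imp_continuous_on[OF gh] continuous_on_interior[of "ball \<tau> (R \<tau>)" "gg \<tau>" \<tau>]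
      by simp
    have qc: "isCont (QK \<tau>) \<tau>" unfolding QK_def by (intro continuous_intros)
    have lim: "((\<lambda>w. gg \<tau> w / QK \<tau> w) \<longlongrightarrow> h \<tau>) (at \<tau>)"
    proof -
      have "((\<lambda>w. gg \<tau> w / QK \<tau> w) \<longlongrightarrow> gg \<tau> \<tau> / QK \<tau> \<tau>) (at \<tau>)"
        using gc qc QKnz by (intro tendsto_divide) (auto simp: isCont_def)
      then show ?thesis using t by (simp add: h_def)
    qed
    have ev: "\<forall>\<^sub>F w in at \<tau>. gg \<tau> w / QK \<tau> w = h w"
    proof -
      have e1: "\<forall>\<^sub>F w in at \<tau>. w \<notin> K" by (rule eventually_notin_finite[OF K(1)])
      have e2: "\<forall>\<^sub>F w in at \<tau>. w \<in> ball \<tau> (R \<tau>)"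
        using R by (intro eventually_at_in_open') auto
      show ?thesis using e1 e2
      proof eventually_elim
        case (elim w)
        then have "w \<noteq> \<tau>" using t by auto
        then have nz: "(w - \<tau>) ^ \<nu> \<tau> \<noteq> 0" by simp
        have "h w = G w / Q w" using elim by (simp add: h_def)
        also have "\<dots> = gg \<tau> w * (w - \<tau>) ^ \<nu> \<tau> / ((w - \<tau>) ^ \<nu> \<tau> * QK \<tau> w)"
          using gf elim Qsplit[OF t] by simp
        also have "\<dots> = gg \<tau> w / QK \<tau> w" using nz by simp
        finally show ?case by simp
      qed
    qed
    have "(h \<longlongrightarrow> h \<tau>) (at \<tau>)" using Lim_transform_eventually[OF lim ev] .
    then show "(h \<longlongrightarrow> h \<tau>) (at \<tau> within \<Omega>)" by (rule tendsto_within_subset) auto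
  qed
  have "\<forall>w\<in>\<Omega> - K. G w = h w * Q w"
    using Qnz by (auto simp: h_def)
  then show ?thesis using h2 unfolding Q_def by blast
qed

lemma S_insert: "{-int (Suc n)..<int (Suc n)} = insert (-int n - 1) (insert (int n) {-int n..<int n})"
  by auto

lemma sum_S_id: "(\<Sum>k\<in>{-int n..<int n}. real_of_int k) = - real n"
proof (induction n)
  case 0 then show ?case by simp
next
  case (Suc n)
  have "(\<Sum>k\<in>{-int (Suc n)..<int (Suc n)}. real_of_int k) = real_of_int (-int n - 1) + (real_of_int (int n) + (\<Sum>k\<in>{-int n..<int n}. real_of_int k))"
    unfolding S_insert by (subst sum.insert; simp)+
  then show ?case using Suc by simp
qed

lemma sum_S_pos: "(\<Sum>k\<in>{-int n..<int n}. max 0 (real_of_int k)) = real n * (real n - 1) / 2"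
proof (induction n)
  case 0 then show ?case by simp
next
  case (Suc n)
  have "(\<Sum>k\<in>{-int (Suc n)..<int (Suc n)}. max 0 (real_of_int k)) = max 0 (real_of_int (-int n - 1)) + (max 0 (real_of_int (int n)) + (\<Sum>k\<in>{-int n..<int n}. max 0 (real_of_int k)))"
    unfolding S_insert by (subst sum.insert; simp)+
  then show ?case using Suc by (simp add: field_simps)
qed

lemma card_S: "card {-int n..<int n} = 2 * n" by simp

definition PP :: "real \<Rightarrow> nat \<Rightarrow> complex \<Rightarrow> complex" where
  "PP a n t = (\<Prod>k\<in>{-int n..<int n}. (t + complex_of_real (pk a k)))"
definition Gin :: "real \<Rightarrow> (int \<Rightarrow> complex) \<Rightarrow> nat \<Rightarrow> complex \<Rightarrow> complex" where
  "Gin a c n t = (\<Sum>k\<in>{-int n..<int n}. bk a c k * (\<Prod>j\<in>{-int n..<int n} - {k}. (t + complex_of_real (pk a j))))"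
definition Fout :: "real \<Rightarrow> (int \<Rightarrow> complex) \<Rightarrow> nat \<Rightarrow> complex \<Rightarrow> complex" where
  "Fout a c n t = (\<Sum>\<^sub>\<infinity>k\<in>UNIV - {-int n..<int n}. bk a c k / (t + complex_of_real (pk a k)))"
definition GG :: "real \<Rightarrow> (int \<Rightarrow> complex) \<Rightarrow> nat \<Rightarrow> complex \<Rightarrow> complex" where
  "GG a c n t = Gin a c n t + PP a n t * Fout a c n t"
definition Om :: "real \<Rightarrow> nat \<Rightarrow> complex set" where
  "Om a n = ball 0 (exp (2 * a * (real n - 1/4))) - cball 0 (exp (2 * a * (- real n - 3/4)))"

lemma open_Om: "open (Om a n)" unfolding Om_def by (intro open_Diff) auto

context
  fixes a :: real and c :: "int \<Rightarrow> complex" and B :: real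
  assumes a_pos: "a > 0" and B_nonneg: "B \<ge> 0" and c_bd: "\<And>k. norm (c k) \<le> B"
begin

lemma Fout_term_bound:
  assumes t: "t \<in> Om a n" and k: "k \<notin> {-int n..<int n}"
  shows "norm (bk a c k / (t + complex_of_real (pk a k))) \<le>
     B / (1 - exp (- a / 2)) * max 1 (1 / exp (2 * a * (- real n - 3/4))) * exp (- a * \<bar>of_int k\<bar>)"
proof -
  define th where "th = exp (- a / 2)"
  define R0 where "R0 = exp (2 * a * (- real n - 3/4))"
  have th: "0 \<le> th" "th < 1" using a_pos by (auto simp: th_def)
  have tn: "norm t < exp (2 * a * (real n - 1/4))" "norm t > R0"
    using t by (auto simp: Om_def R0_def)
  have R0: "R0 > 0" by (simp add: R0_def)
  have C: "B / (1 - th) \<ge> 0" using th B_nonneg by simp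
  show ?thesis
  proof (cases "k \<ge> int n")
    case True
    have "exp (2 * a * (real n - 1/4)) = th * exp (2 * a * real n)"
      unfolding th_def by (subst mult_exp_exp; simp add: algebra_simps)
    also have "\<dots> \<le> th * pk a k"
      using True a_pos th by (intro mult_left_mono) (auto simp: pk_def)
    finally have gap: "norm t \<le> th * pk a k" using tn by linarith
    have ek: "exp (a * of_int k) / pk a k = exp (- a * \<bar>of_int k\<bar>)"
      using True unfolding pk_def by (subst exp_diff[symmetric]) (simp add: algebra_simps)
    have "norm (bk a c k / (t + complex_of_real (pk a k))) \<le> B * exp (a * of_int k) / ((1 - th) * max (norm t) (pk a k))"
      by (rule term_bound_gap[OF a_pos B_nonneg c_bd th]) (use gap in auto)
    also have "\<dots> \<le> B * exp (a * of_int k) / ((1 - th) * pk a k)"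
      using th B_nonneg pk_pos[of a k] by (intro divide_left_mono mult_left_mono mult_pos_pos) auto
    also have "\<dots> = B / (1 - th) * (exp (a * of_int k) / pk a k)"
      using th pk_pos[of a k] by (simp add: field_simps)
    also have "\<dots> = B / (1 - th) * exp (- a * \<bar>of_int k\<bar>)"
      using ek by simp
    also have "\<dots> \<le> B / (1 - th) * max 1 (1 / R0) * exp (- a * \<bar>of_int k\<bar>)"
    proof -
      have "B / (1 - th) \<le> B / (1 - th) * max 1 (1 / R0)"
        using C by (metis max.cobounded1 mult.right_neutral mult_left_mono)
      then show ?thesis by (intro mult_right_mono) auto
    qed
    finally show ?thesis by (simp add: th_def R0_def)
  next
    case False
    then have kk: "k \<le> - int n - 1" using k by auto
    have "pk a k \<le> exp (2 * a * (- real n - 1))"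
      using kk a_pos by (simp add: pk_def)
    also have "\<dots> = th * R0"
      unfolding th_def R0_def by (subst mult_exp_exp; simp add: algebra_simps)
    also have "\<dots> \<le> th * norm t" using tn th by (intro mult_left_mono) auto
    finally have gap: "pk a k \<le> th * norm t" .
    have "norm (bk a c k / (t + complex_of_real (pk a k))) \<le> B * exp (a * of_int k) / ((1 - th) * max (norm t) (pk a k))"
      by (rule term_bound_gap[OF a_pos B_nonneg c_bd th]) (use gap in auto)
    also have "\<dots> \<le> B * exp (a * of_int k) / ((1 - th) * R0)"
      using th B_nonneg R0 tn by (intro divide_left_mono mult_left_mono mult_pos_pos) auto
    also have "\<dots> = B / (1 - th) * (1 / R0) * exp (- a * \<bar>of_int k\<bar>)"
    proof -
      have "\<bar>real_of_int k\<bar> = - real_of_int k" using kk by simp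
      then show ?thesis by simp
    qed
    also have "\<dots> \<le> B / (1 - th) * max 1 (1 / R0) * exp (- a * \<bar>of_int k\<bar>)"
      using C by (intro mult_right_mono mult_left_mono) auto
    finally show ?thesis by (simp add: th_def R0_def)
  qed
qed

lemma Fout_summable_bound:
  "(\<lambda>k. B / (1 - exp (- a / 2)) * max 1 (1 / exp (2 * a * (- real n - 3/4))) * exp (- a * \<bar>of_int k\<bar>)) summable_on (UNIV - {-int n..<int n})"
  by (rule summable_on_subset_banach[OF summable_on_cmult_right[OF geo_int_summable[OF a_pos]]]) auto

lemma GG_holo: "GG a c n holomorphic_on Om a n"
proof -
  have "Fout a c n holomorphic_on Om a n"
    unfolding Fout_def
  proof (rule holo_infsum[OF open_Om])
    fix w assume w: "w \<in> Om a n"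
    obtain r where r: "r > 0" "cball w r \<subseteq> Om a n"
      using open_Om w open_contains_cball by blast
    then show "\<exists>r>0. cball w r \<subseteq> Om a n \<and> (\<exists>M. M summable_on UNIV - {-int n..<int n} \<and>
          (\<forall>k\<in>UNIV - {-int n..<int n}. \<forall>t\<in>cball w r. norm (bk a c k / (t + complex_of_real (pk a k))) \<le> M k))"
      using Fout_term_bound Fout_summable_bound by blast
  next
    fix k assume k: "k \<in> UNIV - {-int n..<int n}"
    show "(\<lambda>t. bk a c k / (t + complex_of_real (pk a k))) holomorphic_on Om a n"
    proof (intro holomorphic_intros)
      fix t assume t: "t \<in> Om a n"
      have "norm (bk a c k / (t + complex_of_real (pk a k))) \<le> B / (1 - exp (- a / 2)) * max 1 (1 / exp (2 * a * (- real n - 3/4))) * exp (- a * \<bar>of_int k\<bar>)"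
        using Fout_term_bound[OF t] k by blast
      show "t + complex_of_real (pk a k) \<noteq> 0"
      proof
        assume eq: "t + complex_of_real (pk a k) = 0"
        then have "norm t = pk a k" using pk_pos[of a k]
          by (metis add_eq_0_iff norm_minus_cancel norm_of_real abs_of_pos)
        moreover have "norm t < exp (2 * a * (real n - 1/4))" "norm t > exp (2 * a * (- real n - 3/4))"
          using t by (auto simp: Om_def)
        ultimately show False using k a_pos by (auto simp: pk_def not_le)
      qed
    qed
  qed
  then show ?thesis
    unfolding GG_def Gin_def PP_def by (intro holomorphic_intros)
qed

lemma GG_eq:
  assumes t: "t \<in> Om a n" and np: "\<And>k. k \<in> {-int n..<int n} \<Longrightarrow> t + complex_of_real (pk a k) \<noteq> 0"
  shows "GG a c n t = FF a c t * PP a n t"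
proof -
  let ?S = "{-int n..<int n}"
  let ?u = "\<lambda>k. bk a c k / (t + complex_of_real (pk a k))"
  have s1: "?u summable_on ?S" by simp
  have s2: "?u summable_on (UNIV - ?S)"
    by (rule summable_bound(1)[OF Fout_summable_bound]) (use Fout_term_bound[OF t] in blast)
  have "FF a c t = infsum ?u (?S \<union> (UNIV - ?S))" unfolding FF_def by simp
  also have "\<dots> = infsum ?u ?S + Fout a c n t"
    unfolding Fout_def by (rule infsum_Un_disjoint[OF s1 s2]) auto
  finally have F: "FF a c t = (\<Sum>k\<in>?S. ?u k) + Fout a c n t" by simp
  have "(\<Sum>k\<in>?S. ?u k) * PP a n t = Gin a c n t"
    unfolding sum_distrib_right Gin_def PP_def
  proof (rule sum.cong[OF refl])
    fix k assume k: "k \<in> ?S"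
    have "(\<Prod>j\<in>?S. t + complex_of_real (pk a j)) = (t + complex_of_real (pk a k)) * (\<Prod>j\<in>?S - {k}. t + complex_of_real (pk a j))"
      using k by (simp add: prod.remove)
    then show "?u k * (\<Prod>j\<in>?S. t + complex_of_real (pk a j)) = bk a c k * (\<Prod>j\<in>?S - {k}. t + complex_of_real (pk a j))"
      using np[OF k] by simp
  qed
  then show ?thesis unfolding GG_def F by (simp add: algebra_simps)
qed

end

lemma prod_le_exp:
  fixes f :: "'i \<Rightarrow> complex"
  assumes "finite A" "\<And>i. i \<in> A \<Longrightarrow> norm (f i) \<le> exp (g i)"
  shows "norm (\<Prod>i\<in>A. f i) \<le> exp (\<Sum>i\<in>A. g i)"
proof -
  have "norm (\<Prod>i\<in>A. f i) = (\<Prod>i\<in>A. norm (f i))" by (simp add: prod_norm)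
  also have "\<dots> \<le> (\<Prod>i\<in>A. exp (g i))" using assms(2) by (intro prod_mono) auto
  also have "\<dots> = exp (\<Sum>i\<in>A. g i)" using assms(1) by (simp add: exp_sum)
  finally show ?thesis .
qed

lemma prod_ge_exp:
  fixes f :: "'i \<Rightarrow> complex"
  assumes "finite A" "\<And>i. i \<in> A \<Longrightarrow> norm (f i) \<ge> exp (g i)"
  shows "norm (\<Prod>i\<in>A. f i) \<ge> exp (\<Sum>i\<in>A. g i)"
proof -
  have "exp (\<Sum>i\<in>A. g i) = (\<Prod>i\<in>A. exp (g i))" using assms(1) by (simp add: exp_sum)
  also have "\<dots> \<le> (\<Prod>i\<in>A. norm (f i))" using assms(2) by (intro prod_mono) (auto intro: less_imp_le)
  also have "\<dots> = norm (\<Prod>i\<in>A. f i)" by (simp add: prod_norm)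
  finally show ?thesis .
qed

lemma pow_le_exp:
  fixes z :: complex
  assumes "norm z \<le> exp g"
  shows "norm (z ^ m) \<le> exp (real m * g)"
  using assms by (simp add: norm_power exp_of_nat_mult power_mono)

lemma pow_ge_exp:
  fixes z :: complex
  assumes "norm z \<ge> exp g"
  shows "norm (z ^ m) \<ge> exp (real m * g)"
  using assms by (simp add: norm_power exp_of_nat_mult power_mono)

lemma two_exp: "2 * exp (x::real) = exp (ln 2 + x)"
  by (simp add: exp_add)

context
  fixes a :: real and c :: "int \<Rightarrow> complex" and B :: real
  assumes a_pos: "a > 0" and B_nonneg: "B \<ge> 0" and c_bd: "\<And>k. norm (c k) \<le> B"
begin

lemma FF_circle:
  assumes t: "norm t = exp (2 * a * (of_int M - 1/2))"
  shows "norm (FF a c t) \<le> B * exp a / (1 - exp (- a)) * (\<Sum>\<^sub>\<infinity>k::int. exp (- a * \<bar>of_int k\<bar>)) * exp (- a * of_int M)"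
proof -
  define th where "th = exp (- a)"
  have th: "0 \<le> th" "th < 1" using a_pos by (auto simp: th_def)
  define K where "K = B * exp a / (1 - th) * exp (- a * of_int M)"
  have K: "K \<ge> 0" using th B_nonneg by (simp add: K_def)
  have bd: "norm (bk a c k / (t + complex_of_real (pk a k))) \<le> K * exp (- a * \<bar>of_int k - of_int M\<bar>)" for k
  proof (cases "k \<le> M - 1")
    case True
    have "pk a k \<le> exp (2 * a * (of_int M - 1))" using True a_pos by (simp add: pk_def)
    also have "\<dots> = th * norm t" unfolding t th_def by (subst mult_exp_exp; simp add: algebra_simps)
    finally have gap: "pk a k \<le> th * norm t" .
    have tpos: "norm t > 0" using t by simp
    have "norm (bk a c k / (t + complex_of_real (pk a k))) \<le> B * exp (a * of_int k) / ((1 - th) * max (norm t) (pk a k))"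
      by (rule term_bound_gap[OF a_pos B_nonneg c_bd th]) (use gap in auto)
    also have "\<dots> \<le> B * exp (a * of_int k) / ((1 - th) * norm t)"
      using th B_nonneg tpos pk_pos[of a k] by (intro divide_left_mono mult_left_mono mult_pos_pos) (auto simp: less_max_iff_disj)
    also have "\<dots> = B / (1 - th) * (exp (a * of_int k) / norm t)"
      using th tpos by (simp add: field_simps)
    also have "exp (a * of_int k) / norm t = exp a * exp (- a * of_int M) * exp (- a * \<bar>of_int k - of_int M\<bar>)"
    proof -
      have "\<bar>real_of_int k - real_of_int M\<bar> = real_of_int M - real_of_int k" using True by simp
      then show ?thesis unfolding t
        by (simp add: exp_diff[symmetric] mult_exp_exp algebra_simps)
    qed
    finally show ?thesis by (simp add: K_def mult_ac)
  next
    case False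
    have "norm t = th * exp (2 * a * of_int M)" unfolding t th_def by (subst mult_exp_exp; simp add: algebra_simps)
    also have "\<dots> \<le> th * pk a k" using False a_pos th by (intro mult_left_mono) (auto simp: pk_def)
    finally have gap: "norm t \<le> th * pk a k" .
    have "norm (bk a c k / (t + complex_of_real (pk a k))) \<le> B * exp (a * of_int k) / ((1 - th) * max (norm t) (pk a k))"
      by (rule term_bound_gap[OF a_pos B_nonneg c_bd th]) (use gap in auto)
    also have "\<dots> \<le> B * exp (a * of_int k) / ((1 - th) * pk a k)"
      using th B_nonneg pk_pos[of a k] by (intro divide_left_mono mult_left_mono mult_pos_pos) auto
    also have "\<dots> = B / (1 - th) * (exp (a * of_int k) / pk a k)"
      using th pk_pos[of a k] by (simp add: field_simps)
    also have "\<dots> \<le> B / (1 - th) * (exp a * exp (- a * of_int M) * exp (- a * \<bar>of_int k - of_int M\<bar>))"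
    proof -
      have "\<bar>real_of_int k - real_of_int M\<bar> = real_of_int k - real_of_int M" using False by simp
      moreover have "exp (a * of_int k) / pk a k = exp (- a * of_int k)"
        unfolding pk_def by (subst exp_diff[symmetric]) (simp add: algebra_simps)
      ultimately have "exp (a * of_int k) / pk a k \<le> exp a * exp (- a * of_int M) * exp (- a * \<bar>of_int k - of_int M\<bar>)"
        using a_pos by (simp add: mult_exp_exp algebra_simps)
      then show ?thesis using th B_nonneg by (intro mult_left_mono) auto
    qed
    finally show ?thesis by (simp add: K_def mult_ac)
  qed
  have sm: "(\<lambda>k. K * exp (- a * \<bar>of_int k - of_int M\<bar>)) summable_on UNIV"
    by (rule summable_on_cmult_right[OF geo_int_shift_summable[OF a_pos]])
  have "norm (FF a c t) \<le> (\<Sum>\<^sub>\<infinity>k. K * exp (- a * \<bar>of_int k - of_int M\<bar>))"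
    unfolding FF_def by (rule summable_bound(2)[OF sm]) (use bd in auto)
  also have "\<dots> = K * (\<Sum>\<^sub>\<infinity>k::int. exp (- a * \<bar>of_int k\<bar>))"
    using geo_int_shift[of a M] by (simp add: infsum_cmult_right')
  finally show ?thesis by (simp add: K_def th_def mult_ac)
qed

lemma PP_outer:
  assumes w: "norm w = exp (2 * a * (real n - 1/2))"
  shows "norm (PP a n w) \<le> exp (real (2 * n) * (ln 2 + 2 * a * (real n - 1/2)))"
proof -
  have "norm (PP a n w) \<le> exp (\<Sum>k\<in>{-int n..<int n}. ln 2 + 2 * a * (real n - 1/2))"
    unfolding PP_def
  proof (rule prod_le_exp)
    fix k assume k: "k \<in> {-int n..<int n}"
    have "pk a k \<le> exp (2 * a * (real n - 1/2))"
      using k a_pos by (simp add: pk_def)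
    then have "norm (w + complex_of_real (pk a k)) \<le> 2 * exp (2 * a * (real n - 1/2))"
      using norm_triangle_ineq[of w "complex_of_real (pk a k)"] w pk_pos[of a k] by simp
    then show "norm (w + complex_of_real (pk a k)) \<le> exp (ln 2 + 2 * a * (real n - 1/2))"
      by (simp add: two_exp)
  qed simp
  then show ?thesis by simp
qed

lemma PP_inner:
  assumes w: "norm w = exp (2 * a * (- real n - 1/2))"
  shows "norm (PP a n w) \<le> exp (real (2 * n) * ln 2 - 2 * a * real n)"
proof -
  have "norm (PP a n w) \<le> exp (\<Sum>k\<in>{-int n..<int n}. ln 2 + 2 * a * real_of_int k)"
    unfolding PP_def
  proof (rule prod_le_exp)
    fix k assume k: "k \<in> {-int n..<int n}"
    have "exp (2 * a * (- real n - 1/2)) \<le> pk a k"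
      using k a_pos by (simp add: pk_def)
    then have "norm (w + complex_of_real (pk a k)) \<le> 2 * pk a k"
      using norm_triangle_ineq[of w "complex_of_real (pk a k)"] w pk_pos[of a k] by simp
    then show "norm (w + complex_of_real (pk a k)) \<le> exp (ln 2 + 2 * a * real_of_int k)"
      by (simp add: two_exp pk_def)
  qed simp
  also have "(\<Sum>k\<in>{-int n..<int n}. ln 2 + 2 * a * real_of_int k) = real (2 * n) * ln 2 - 2 * a * real n"
    by (simp add: sum.distrib sum_distrib_left[symmetric] sum_S_id)
  finally show ?thesis .
qed

lemma PP_star:
  shows "norm (PP a n (complex_of_real (exp (2 * a * x)))) \<ge> exp (a * real n * (real n - 1) - 4 * a * real n * \<bar>x\<bar>)"
proof -
  have "norm (PP a n (complex_of_real (exp (2 * a * x)))) \<ge> exp (\<Sum>k\<in>{-int n..<int n}. 2 * a * (max 0 (real_of_int k) - \<bar>x\<bar>))"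
    unfolding PP_def
  proof (rule prod_ge_exp)
    fix k assume k: "k \<in> {-int n..<int n}"
    have "norm (complex_of_real (exp (2 * a * x)) + complex_of_real (pk a k)) = exp (2 * a * x) + pk a k"
      using pk_pos[of a k] by (metis of_real_add norm_of_real abs_of_pos add_pos_pos exp_gt_zero)
    moreover have "exp (2 * a * (max 0 (real_of_int k) - \<bar>x\<bar>)) \<le> exp (2 * a * x) + pk a k"
    proof (cases "k \<ge> 0")
      case True
      have "exp (2 * a * (max 0 (real_of_int k) - \<bar>x\<bar>)) \<le> pk a k"
        using True a_pos by (simp add: pk_def)
      then show ?thesis by (smt (verit) exp_gt_zero)
    next
      case False
      have "exp (2 * a * (max 0 (real_of_int k) - \<bar>x\<bar>)) \<le> exp (2 * a * x)"
        using False a_pos mult_left_mono[of "-\<bar>x\<bar>" x a] by auto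
      then show ?thesis using pk_pos[of a k] by linarith
    qed
    ultimately show "norm (complex_of_real (exp (2 * a * x)) + complex_of_real (pk a k)) \<ge> exp (2 * a * (max 0 (real_of_int k) - \<bar>x\<bar>))"
      by simp
  qed simp
  also have "(\<Sum>k\<in>{-int n..<int n}. 2 * a * (max 0 (real_of_int k) - \<bar>x\<bar>)) = a * real n * (real n - 1) - 4 * a * real n * \<bar>x\<bar>"
    by (simp add: sum_subtractf sum_distrib_left[symmetric] right_diff_distrib sum_S_pos)
  finally show ?thesis .
qed

end

definition Kc :: "real \<Rightarrow> real \<Rightarrow> real" where
  "Kc a B = B * exp a / (1 - exp (- a)) * (\<Sum>\<^sub>\<infinity>k::int. exp (- a * \<bar>of_int k\<bar>))"

lemma Kc_nonneg: "a > 0 \<Longrightarrow> B \<ge> 0 \<Longrightarrow> Kc a B \<ge> 0"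
  unfolding Kc_def by (intro mult_nonneg_nonneg divide_nonneg_pos infsum_nonneg) auto

context
  fixes a :: real and c :: "int \<Rightarrow> complex" and B :: real and f :: "real \<Rightarrow> complex"
    and D :: nat and W :: "int \<Rightarrow> real set" and \<mu> :: "int \<Rightarrow> real \<Rightarrow> nat" and xs :: real and N :: nat
  assumes a_pos: "a > 0" and B_nonneg: "B \<ge> 0" and c_bd: "\<And>k. norm (c k) \<le> B"
    and f_eq: "\<And>x. f x = 2 * complex_of_real (exp (a * x)) * FF a c (complex_of_real (exp (2 * a * x)))"
    and D2: "D \<ge> 2"
    and W_sub: "\<And>j. W j \<subseteq> {x. f x = 0} \<inter> {real_of_int j * real D .. real_of_int j * real D + real D - 1}"
    and W_fin: "\<And>j. finite (W j)"
    and mu_le: "\<And>j x. \<mu> j x \<le> zero_mult f x"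
    and mu_out: "\<And>j x. x \<notin> W j \<Longrightarrow> \<mu> j x = 0"
    and mu_sum: "\<And>j. sum (\<mu> j) (W j) = D + 1"
    and xs: "f xs \<noteq> 0"
    and Nbig: "real N * real D \<ge> \<bar>xs\<bar> + 1"
begin

definition n0 where "n0 = N * D"
definition J where "J = {-int N..<int N}"
definition Zs where "Zs = (\<Union>j\<in>J. W j)"
definition mu' where "mu' x = (\<Sum>j\<in>J. \<mu> j x)"
definition EE where "EE x = complex_of_real (exp (2 * a * x))"

lemma f_nz: "\<exists>x. f x \<noteq> 0" using xs by blast

lemma Zs_fin: "finite Zs" unfolding Zs_def J_def using W_fin by auto

lemma Zs_props:
  assumes "x \<in> Zs"
  shows "f x = 0" "- real n0 \<le> x" "x \<le> real n0 - 1"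
proof -
  obtain j where j: "j \<in> J" "x \<in> W j" using assms by (auto simp: Zs_def)
  then have x: "f x = 0" "real_of_int j * real D \<le> x" "x \<le> real_of_int j * real D + real D - 1"
    using W_sub[of j] by auto
  have j1: "- int N \<le> j" "j \<le> int N - 1" using j(1) by (auto simp: J_def)
  have "real_of_int (- int N) * real D \<le> real_of_int j * real D"
    using j1 by (intro mult_right_mono) auto
  then show "- real n0 \<le> x" using x by (simp add: n0_def)
  have "real_of_int j * real D \<le> real_of_int (int N - 1) * real D"
    using j1 by (intro mult_right_mono) auto
  then show "x \<le> real n0 - 1" using x by (simp add: n0_def algebra_simps)
  show "f x = 0" by (rule x(1))
qed

lemma W_disj:
  assumes "x \<in> W j" "x \<in> W i" shows "i = j"
proof (rule ccontr)
  assume ne: "i \<noteq> j"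
  have a1: "real_of_int j * real D \<le> x" "x \<le> real_of_int j * real D + real D - 1"
    and a2: "real_of_int i * real D \<le> x" "x \<le> real_of_int i * real D + real D - 1"
    using assms W_sub[of j] W_sub[of i] by auto
  show False
  proof (cases "i < j")
    case True
    then have "real_of_int i + 1 \<le> real_of_int j" by linarith
    then have "(real_of_int i + 1) * real D \<le> real_of_int j * real D" by (intro mult_right_mono) auto
    then show False using a1 a2 by (simp add: algebra_simps)
  next
    case False
    then have "real_of_int j + 1 \<le> real_of_int i" using ne by linarith
    then have "(real_of_int j + 1) * real D \<le> real_of_int i * real D" by (intro mult_right_mono) auto
    then show False using a1 a2 by (simp add: algebra_simps)
  qed
qed

lemma mu'_le: "mu' x \<le> zero_mult f x"
proof (cases "\<exists>j\<in>J. x \<in> W j")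
  case True
  then obtain j where j: "j \<in> J" "x \<in> W j" by blast
  have "mu' x = \<mu> j x + (\<Sum>i\<in>J - {j}. \<mu> i x)"
    unfolding mu'_def using j by (simp add: sum.remove J_def)
  also have "(\<Sum>i\<in>J - {j}. \<mu> i x) = 0"
    using W_disj[of x j] j mu_out by (intro sum.neutral) blast
  finally show ?thesis using mu_le[of j x] by simp
next
  case False
  then have "mu' x = 0" unfolding mu'_def using mu_out by (intro sum.neutral) blast
  then show ?thesis by simp
qed

lemma sum_swap:
  "(\<Sum>x\<in>Zs. real (mu' x) * g x) = (\<Sum>j\<in>J. \<Sum>x\<in>W j. real (\<mu> j x) * g x)"
proof -
  have "(\<Sum>x\<in>Zs. real (mu' x) * g x) = (\<Sum>x\<in>Zs. \<Sum>j\<in>J. real (\<mu> j x) * g x)"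
    unfolding mu'_def by (simp add: sum_distrib_right)
  also have "\<dots> = (\<Sum>j\<in>J. \<Sum>x\<in>Zs. real (\<mu> j x) * g x)" by (rule sum.swap)
  also have "\<dots> = (\<Sum>j\<in>J. \<Sum>x\<in>W j. real (\<mu> j x) * g x)"
  proof (rule sum.cong[OF refl])
    fix j assume j: "j \<in> J"
    show "(\<Sum>x\<in>Zs. real (\<mu> j x) * g x) = (\<Sum>x\<in>W j. real (\<mu> j x) * g x)"
      using j Zs_fin mu_out by (intro sum.mono_neutral_right) (auto simp: Zs_def)
  qed
  finally show ?thesis .
qed

lemma card_J: "card J = 2 * N" by (simp add: J_def)

lemma Zc: "(\<Sum>x\<in>Zs. real (mu' x)) = 2 * real N * (real D + 1)"
proof -
  have "(\<Sum>x\<in>Zs. real (mu' x)) = (\<Sum>x\<in>Zs. real (mu' x) * 1)" by simp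
  also have "\<dots> = (\<Sum>j\<in>J. \<Sum>x\<in>W j. real (\<mu> j x) * 1)" by (rule sum_swap)
  also have "\<dots> = (\<Sum>j\<in>J. real D + 1)"
    using mu_sum by (simp flip: of_nat_sum)
  finally show ?thesis by (simp add: card_J)
qed

lemma block_lower:
  "(\<Sum>x\<in>Zs. real (mu' x) * x) \<ge> - ((real D + 1) * real D * real N)"
proof -
  have "(\<Sum>j\<in>J. (real D + 1) * (real_of_int j * real D)) \<le> (\<Sum>j\<in>J. \<Sum>x\<in>W j. real (\<mu> j x) * x)"
  proof (rule sum_mono)
    fix j assume j: "j \<in> J"
    have "(\<Sum>x\<in>W j. real (\<mu> j x) * (real_of_int j * real D)) \<le> (\<Sum>x\<in>W j. real (\<mu> j x) * x)"
      using W_sub[of j] by (intro sum_mono mult_left_mono) auto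
    moreover have "(\<Sum>x\<in>W j. real (\<mu> j x) * (real_of_int j * real D)) = (real D + 1) * (real_of_int j * real D)"
      using mu_sum[of j] by (simp add: sum_distrib_right[symmetric] flip: of_nat_sum)
    ultimately show "(real D + 1) * (real_of_int j * real D) \<le> (\<Sum>x\<in>W j. real (\<mu> j x) * x)" by simp
  qed
  moreover have "(\<Sum>j\<in>J. (real D + 1) * (real_of_int j * real D)) = - ((real D + 1) * real D * real N)"
  proof -
    have "(\<Sum>j\<in>J. (real D + 1) * (real_of_int j * real D)) = (real D + 1) * real D * (\<Sum>j\<in>J. real_of_int j)"
      by (simp add: sum_distrib_left mult_ac)
    also have "\<dots> = - ((real D + 1) * real D * real N)" by (simp add: J_def sum_S_id)
    finally show ?thesis .
  qed
  ultimately show ?thesis using sum_swap[of "\<lambda>x. x"] by simp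
qed

lemma block_upper:
  "(\<Sum>x\<in>Zs. real (mu' x) * max 0 x) \<le> (real D + 1) * (real D * (real N * (real N - 1) / 2) + 2 * real N * real D)"
proof -
  have "(\<Sum>j\<in>J. \<Sum>x\<in>W j. real (\<mu> j x) * max 0 x) \<le> (\<Sum>j\<in>J. (real D + 1) * (real D * max 0 (real_of_int j) + real D))"
  proof (rule sum_mono)
    fix j assume j: "j \<in> J"
    have bx: "max 0 x \<le> real D * max 0 (real_of_int j) + real D" if "x \<in> W j" for x
    proof -
      have x: "x \<le> real_of_int j * real D + real D - 1" using that W_sub[of j] by auto
      show ?thesis
      proof (cases "j \<ge> 0")
        case True then show ?thesis using x by (simp add: mult.commute)
      next
        case False
        then have "real_of_int j \<le> -1" by simp
        then have "real_of_int j * real D \<le> (-1) * real D" by (intro mult_right_mono) auto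
        then show ?thesis using x by simp
      qed
    qed
    have "(\<Sum>x\<in>W j. real (\<mu> j x) * max 0 x) \<le> (\<Sum>x\<in>W j. real (\<mu> j x) * (real D * max 0 (real_of_int j) + real D))"
      using bx by (intro sum_mono mult_left_mono) auto
    also have "\<dots> = (real D + 1) * (real D * max 0 (real_of_int j) + real D)"
      using mu_sum[of j] by (simp add: sum_distrib_right[symmetric] flip: of_nat_sum)
    finally show "(\<Sum>x\<in>W j. real (\<mu> j x) * max 0 x) \<le> (real D + 1) * (real D * max 0 (real_of_int j) + real D)" .
  qed
  also have "(\<Sum>j\<in>J. (real D + 1) * (real D * max 0 (real_of_int j) + real D)) =
      (real D + 1) * (real D * (real N * (real N - 1) / 2) + 2 * real N * real D)"
    by (simp add: J_def sum.distrib sum_distrib_left[symmetric] sum_S_pos)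
  finally show ?thesis using sum_swap[of "\<lambda>x. max 0 x"] by simp
qed


lemma mem_Om: "w \<in> Om a n \<longleftrightarrow> exp (2 * a * (- real n - 3/4)) < norm w \<and> norm w < exp (2 * a * (real n - 1/4))"
  by (auto simp: Om_def)

lemma EE_norm: "norm (EE x) = exp (2 * a * x)" by (simp add: EE_def)

lemma EE_inj: "inj EE"
proof
  fix x y assume "EE x = EE y"
  then have "exp (2 * a * x) = exp (2 * a * y)" by (simp add: EE_def)
  then show "x = y" using a_pos by simp
qed

definition KK where "KK = EE ` Zs"
definition nu where "nu \<tau> = mu' (ln (Re \<tau>) / (2 * a))"
definition QQ where "QQ w = (\<Prod>\<xi>\<in>Zs. (w - EE \<xi>) ^ mu' \<xi>)"

lemma nu_EE: "nu (EE x) = mu' x"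
  using a_pos by (simp add: nu_def EE_def)

lemma QQ_eq: "(\<Prod>\<sigma>\<in>KK. (w - \<sigma>) ^ nu \<sigma>) = QQ w"
  unfolding KK_def QQ_def
  by (subst prod.reindex) (auto simp: nu_EE inj_on_def intro: injD[OF EE_inj])

lemma KK_fin: "finite KK" unfolding KK_def using Zs_fin by simp

lemma Zs_norm_bounds:
  assumes "x \<in> Zs"
  shows "exp (- 2 * a * real n0) \<le> norm (EE x)" "norm (EE x) \<le> exp (2 * a * (real n0 - 1))"
proof -
  have "2 * a * (- real n0) \<le> 2 * a * x" using Zs_props(2)[OF assms] a_pos by (intro mult_left_mono) auto
  then show "exp (- 2 * a * real n0) \<le> norm (EE x)" by (simp add: EE_norm)
  have "2 * a * x \<le> 2 * a * (real n0 - 1)" using Zs_props(3)[OF assms] a_pos by (intro mult_left_mono) auto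
  then show "norm (EE x) \<le> exp (2 * a * (real n0 - 1))" by (simp add: EE_norm)
qed

lemma KK_Om: "KK \<subseteq> Om a n0"
proof
  fix \<tau> assume "\<tau> \<in> KK"
  then obtain x where x: "x \<in> Zs" "\<tau> = EE x" by (auto simp: KK_def)
  have "exp (2 * a * (- real n0 - 3/4)) < exp (- 2 * a * real n0)" using a_pos by (simp add: algebra_simps)
  moreover have "exp (2 * a * (real n0 - 1)) < exp (2 * a * (real n0 - 1/4))" using a_pos by (simp add: algebra_simps)
  ultimately have "exp (2 * a * (- real n0 - 3/4)) < norm \<tau>" "norm \<tau> < exp (2 * a * (real n0 - 1/4))"
    using Zs_norm_bounds[OF x(1)] x(2) by (meson less_le_trans le_less_trans)+
  then show "\<tau> \<in> Om a n0" unfolding mem_Om by blast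
qed

lemma exists_h: "\<exists>h. h holomorphic_on Om a n0 \<and> (\<forall>w\<in>Om a n0 - KK. GG a c n0 w = h w * QQ w)"
proof -
  have "\<exists>h. h holomorphic_on Om a n0 \<and> (\<forall>w\<in>Om a n0 - KK. GG a c n0 w = h w * (\<Prod>\<sigma>\<in>KK. (w - \<sigma>) ^ nu \<sigma>))"
  proof (rule divide_zeros[OF open_Om GG_holo[OF a_pos B_nonneg c_bd] KK_fin KK_Om])
    fix \<tau> assume t: "\<tau> \<in> KK"
    then obtain x where x: "x \<in> Zs" "\<tau> = EE x" by (auto simp: KK_def)
    obtain r g where r: "r > 0" "cball \<tau> r \<subseteq> {t. Re t > 0}" "g holomorphic_on cball \<tau> r"
      and fac: "\<And>w. w \<in> cball \<tau> r \<Longrightarrow> FF a c w = g w * (w - \<tau>) ^ zero_mult f x \<and> g w \<noteq> 0"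
      using zero_factor[OF a_pos B_nonneg c_bd f_eq f_nz, of x] x(2) unfolding EE_def by metis
    obtain e where e: "e > 0" "ball \<tau> e \<subseteq> Om a n0"
      using open_Om t KK_Om open_contains_ball by blast
    define r' where "r' = min r e"
    have r': "r' > 0" "ball \<tau> r' \<subseteq> cball \<tau> r" "ball \<tau> r' \<subseteq> Om a n0"
      using r e by (auto simp: r'_def)
    define g' where "g' w = g w * PP a n0 w * (w - \<tau>) ^ (zero_mult f x - mu' x)" for w
    have "g' holomorphic_on ball \<tau> r'"
      unfolding g'_def PP_def
      by (intro holomorphic_intros holomorphic_on_subset[OF r(3) r'(2)])
    moreover have "GG a c n0 w = g' w * (w - \<tau>) ^ nu \<tau>" if w: "w \<in> ball \<tau> r'" for w
    proof -
      have wO: "w \<in> Om a n0" using w r' by auto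
      have wre: "Re w > 0" using w r' r(2) by auto
      have np: "w + complex_of_real (pk a k) \<noteq> 0" for k
      proof
        assume "w + complex_of_real (pk a k) = 0"
        then have "Re (w + complex_of_real (pk a k)) = 0" by simp
        then show False using wre pk_pos[of a k] by simp
      qed
      have "GG a c n0 w = FF a c w * PP a n0 w"
        by (rule GG_eq[OF a_pos B_nonneg c_bd wO np])
      also have "\<dots> = g w * (w - \<tau>) ^ zero_mult f x * PP a n0 w"
        using fac[of w] w r' by auto
      also have "(w - \<tau>) ^ zero_mult f x = (w - \<tau>) ^ (zero_mult f x - mu' x) * (w - \<tau>) ^ mu' x"
        using mu'_le[of x] by (simp add: power_add[symmetric])
      finally show ?thesis using x by (simp add: g'_def nu_EE mult_ac)
    qed
    ultimately show "\<exists>r>0. \<exists>g. g holomorphic_on ball \<tau> r \<and> (\<forall>w\<in>ball \<tau> r. GG a c n0 w = g w * (w - \<tau>) ^ nu \<tau>)"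
      using r'(1) by blast
  qed
  then show ?thesis unfolding QQ_eq .
qed


lemma combine_upper:
  fixes p u v q :: real
  assumes "0 \<le> p" "p \<le> exp x1" "0 \<le> u" "u \<le> exp x2" "0 \<le> v" "v \<le> exp x3" "exp x4 \<le> q"
  shows "p * (u * v / q) \<le> exp (x1 + x2 + x3 - x4)"
proof -
  have q: "q > 0" using assms(7) exp_gt_zero[of x4] by linarith
  have "u * v / q \<le> exp x2 * exp x3 / exp x4"
    using assms q by (intro frac_le mult_mono) auto
  then have "p * (u * v / q) \<le> exp x1 * (exp x2 * exp x3 / exp x4)"
    using assms q by (intro mult_mono) auto
  also have "\<dots> = exp (x1 + x2 + x3 - x4)" by (simp add: exp_add exp_diff)
  finally show ?thesis .
qed

lemma combine_lower:
  fixes p u v q :: real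
  assumes "exp x1 \<le> p" "exp x2 \<le> u" "exp x3 \<le> v" "0 < q" "q \<le> exp x4"
  shows "exp (x1 + x2 + x3 - x4) \<le> p * (u * v / q)"
proof -
  have pos: "0 \<le> p" "0 \<le> u" "0 \<le> v" using assms(1-3) exp_gt_zero[of x1] exp_gt_zero[of x2] exp_gt_zero[of x3] by linarith+
  have "exp x2 * exp x3 / exp x4 \<le> u * v / q"
    using assms pos by (intro frac_le mult_mono) auto
  then have "exp x1 * (exp x2 * exp x3 / exp x4) \<le> p * (u * v / q)"
    using assms pos by (intro mult_mono) auto
  moreover have "exp x1 * (exp x2 * exp x3 / exp x4) = exp (x1 + x2 + x3 - x4)" by (simp add: exp_add exp_diff)
  ultimately show ?thesis by simp
qed

lemma exp_lth: "exp (ln (1 - exp (- a))) = 1 - exp (- a)"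
  using a_pos by simp

lemma FF_le_kappa: "Kc a B * exp y \<le> exp (ln (Kc a B + 1) + y)"
proof -
  have "Kc a B \<le> Kc a B + 1" by simp
  then have "Kc a B * exp y \<le> (Kc a B + 1) * exp y" by (intro mult_right_mono) auto
  also have "\<dots> = exp (ln (Kc a B + 1) + y)"
    using Kc_nonneg[OF a_pos B_nonneg] by (simp add: exp_add)
  finally show ?thesis .
qed

lemma h_formula:
  assumes hol: "h holomorphic_on Om a n0" and heq: "\<forall>w\<in>Om a n0 - KK. GG a c n0 w = h w * QQ w"
    and wO: "w \<in> Om a n0" and wK: "\<And>x. x \<in> Zs \<Longrightarrow> w \<noteq> EE x"
    and np: "\<And>k. k \<in> {-int n0..<int n0} \<Longrightarrow> w + complex_of_real (pk a k) \<noteq> 0"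
  shows "h w = FF a c w * PP a n0 w / QQ w" "QQ w \<noteq> 0"
proof -
  show Qnz: "QQ w \<noteq> 0"
    unfolding QQ_def using Zs_fin wK by (auto simp: prod_zero_iff)
  have "w \<notin> KK" using wK by (auto simp: KK_def)
  then have "GG a c n0 w = h w * QQ w" using heq wO by blast
  moreover have "GG a c n0 w = FF a c w * PP a n0 w" by (rule GG_eq[OF a_pos B_nonneg c_bd wO np])
  ultimately show "h w = FF a c w * PP a n0 w / QQ w" using Qnz by (simp add: field_simps)
qed

lemma outer_bound:
  assumes hol: "h holomorphic_on Om a n0" and heq: "\<forall>w\<in>Om a n0 - KK. GG a c n0 w = h w * QQ w"
    and w: "norm w = exp (2 * a * (real n0 - 1/2))"
  shows "norm (w ^ N * h w) \<le> exp (2 * a * (real n0 - 1/2) * real N + (ln (Kc a B + 1) - a * real n0)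
     + real (2 * n0) * (ln 2 + 2 * a * (real n0 - 1/2))
     - (2 * a * (real n0 - 1/2) + ln (1 - exp (- a))) * (2 * real N * (real D + 1)))"
proof -
  have T1lt: "exp (2 * a * (real n0 - 1)) < exp (2 * a * (real n0 - 1/2))" using a_pos by (simp add: algebra_simps)
  have wO: "w \<in> Om a n0"
  proof -
    have "- real n0 - 3/4 < real n0 - 1/2" using of_nat_0_le_iff[of n0] by linarith
    then have "2 * a * (- real n0 - 3/4) < 2 * a * (real n0 - 1/2)" using a_pos by (intro mult_strict_left_mono) auto
    then have "exp (2 * a * (- real n0 - 3/4)) < exp (2 * a * (real n0 - 1/2))" by simp
    moreover have "exp (2 * a * (real n0 - 1/2)) < exp (2 * a * (real n0 - 1/4))" using a_pos by (simp add: algebra_simps)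
    ultimately show ?thesis unfolding mem_Om w by blast
  qed
  have wK: "w \<noteq> EE x" if "x \<in> Zs" for x
    using Zs_norm_bounds(2)[OF that] T1lt w by auto
  have np: "w + complex_of_real (pk a k) \<noteq> 0" if k: "k \<in> {-int n0..<int n0}" for k
  proof
    assume "w + complex_of_real (pk a k) = 0"
    then have "norm w = pk a k" using pk_pos[of a k]
      by (metis add_eq_0_iff norm_minus_cancel norm_of_real abs_of_pos)
    moreover have "pk a k \<le> exp (2 * a * (real n0 - 1))" using k a_pos by (simp add: pk_def)
    ultimately show False using T1lt w by simp
  qed
  note hf = h_formula[OF hol heq wO wK np]
  have F: "norm (FF a c w) \<le> exp (ln (Kc a B + 1) - a * real n0)"
  proof -
    have "norm w = exp (2 * a * (of_int (int n0) - 1/2))" using w by simp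
    from FF_circle[OF a_pos B_nonneg c_bd this]
    have "norm (FF a c w) \<le> Kc a B * exp (- a * real n0)" by (simp add: Kc_def)
    also have "\<dots> \<le> exp (ln (Kc a B + 1) + - a * real n0)" by (rule FF_le_kappa)
    finally show ?thesis by simp
  qed
  have P: "norm (PP a n0 w) \<le> exp (real (2 * n0) * (ln 2 + 2 * a * (real n0 - 1/2)))"
    by (rule PP_outer[OF a_pos B_nonneg c_bd w])
  have Q: "norm (QQ w) \<ge> exp ((2 * a * (real n0 - 1/2) + ln (1 - exp (- a))) * (2 * real N * (real D + 1)))"
  proof -
    have "norm (QQ w) \<ge> exp (\<Sum>x\<in>Zs. real (mu' x) * (2 * a * (real n0 - 1/2) + ln (1 - exp (- a))))"
      unfolding QQ_def
    proof (rule prod_ge_exp[OF Zs_fin], rule pow_ge_exp)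
      fix x assume x: "x \<in> Zs"
      have "norm (w - EE x) \<ge> norm w - norm (EE x)" by (rule norm_triangle_ineq2)
      moreover have "norm (EE x) \<le> exp (2 * a * (real n0 - 1/2)) * exp (- a)"
      proof -
        have "exp (2 * a * (real n0 - 1/2)) * exp (- a) = exp (2 * a * (real n0 - 1))"
          by (subst mult_exp_exp; simp add: algebra_simps)
        then show ?thesis using Zs_norm_bounds(2)[OF x] by simp
      qed
      moreover have "exp (2 * a * (real n0 - 1/2)) * (1 - exp (- a)) = exp (2 * a * (real n0 - 1/2)) - exp (2 * a * (real n0 - 1/2)) * exp (- a)"
        by (simp add: right_diff_distrib)
      ultimately have "norm (w - EE x) \<ge> exp (2 * a * (real n0 - 1/2)) * (1 - exp (- a))"
        using w by linarith
      then show "exp (2 * a * (real n0 - 1/2) + ln (1 - exp (- a))) \<le> norm (w - EE x)"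
        by (simp add: exp_add exp_lth)
    qed
    also have "(\<Sum>x\<in>Zs. real (mu' x) * (2 * a * (real n0 - 1/2) + ln (1 - exp (- a)))) =
        (2 * a * (real n0 - 1/2) + ln (1 - exp (- a))) * (2 * real N * (real D + 1))"
      by (simp add: sum_distrib_right[symmetric] Zc mult_ac)
    finally show ?thesis .
  qed
  have Wn: "norm (w ^ N) = exp (2 * a * (real n0 - 1/2) * real N)"
    by (simp add: norm_power w exp_of_nat_mult[symmetric] mult_ac)
  have "norm (w ^ N * h w) = norm (w ^ N) * (norm (FF a c w) * norm (PP a n0 w) / norm (QQ w))"
    using hf by (simp add: norm_mult norm_divide)
  also have "\<dots> \<le> exp (2 * a * (real n0 - 1/2) * real N + (ln (Kc a B + 1) - a * real n0)
     + real (2 * n0) * (ln 2 + 2 * a * (real n0 - 1/2))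
     - (2 * a * (real n0 - 1/2) + ln (1 - exp (- a))) * (2 * real N * (real D + 1)))"
    by (rule combine_upper) (use Wn F P Q in auto)
  finally show ?thesis .
qed


lemma Qinner:
  assumes w: "norm w = exp (2 * a * (- real n0 - 1/2))"
  shows "norm (QQ w) \<ge> exp (2 * a * (- ((real D + 1) * real D * real N)) + ln (1 - exp (- a)) * (2 * real N * (real D + 1)))"
  proof -
    have "norm (QQ w) \<ge> exp (\<Sum>x\<in>Zs. real (mu' x) * (2 * a * x + ln (1 - exp (- a))))"
      unfolding QQ_def
    proof (rule prod_ge_exp[OF Zs_fin], rule pow_ge_exp)
      fix x assume x: "x \<in> Zs"
      have tri0: "norm (EE x) - norm w \<le> norm (EE x - w)" by (rule norm_triangle_ineq2)
      have tri: "norm (EE x) - norm w \<le> norm (w - EE x)"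
        using tri0 norm_minus_commute[of "EE x" w] by linarith
      have ineq: "2 * a * (- real n0 - 1/2) \<le> 2 * a * x - a"
      proof -
        have h1: "2 * a * (- real n0) \<le> 2 * a * x" using Zs_props(2)[OF x] a_pos by (intro mult_left_mono) auto
        have h2: "2 * a * (- real n0 - 1/2) = 2 * a * (- real n0) - 2 * a * (1/2)" by (rule right_diff_distrib)
        have h3: "2 * a * (1/2) = a" by simp
        show ?thesis using h1 h2 h3 by linarith
      qed
      have e1: "exp (2 * a * x - a) = exp (2 * a * x) * exp (- a)"
        using exp_add[of "2 * a * x" "- a"] by simp
      have "exp (2 * a * (- real n0 - 1/2)) \<le> exp (2 * a * x - a)"
        using ineq by (simp only: exp_le_cancel_iff)
      then have nw: "norm w \<le> exp (2 * a * x) * exp (- a)"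
        using w e1 by linarith
      have e2: "exp (2 * a * x + ln (1 - exp (- a))) = exp (2 * a * x) - exp (2 * a * x) * exp (- a)"
        using exp_add[of "2 * a * x" "ln (1 - exp (- a))"] exp_lth by (simp add: right_diff_distrib)
      show "exp (2 * a * x + ln (1 - exp (- a))) \<le> norm (w - EE x)"
        using tri nw e2 EE_norm[of x] by linarith
    qed
    moreover have e1: "(\<Sum>x\<in>Zs. real (mu' x) * (2 * a * x + ln (1 - exp (- a)))) =
        2 * a * (\<Sum>x\<in>Zs. real (mu' x) * x) + ln (1 - exp (- a)) * (2 * real N * (real D + 1))"
    proof -
      have "(\<Sum>x\<in>Zs. real (mu' x) * (2 * a * x + ln (1 - exp (- a)))) =
          (\<Sum>x\<in>Zs. 2 * a * (real (mu' x) * x) + ln (1 - exp (- a)) * real (mu' x))"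
        by (rule sum.cong[OF refl]) (simp add: distrib_left mult_ac)
      also have "\<dots> = 2 * a * (\<Sum>x\<in>Zs. real (mu' x) * x) + ln (1 - exp (- a)) * (\<Sum>x\<in>Zs. real (mu' x))"
        by (simp only: sum.distrib sum_distrib_left)
      finally show ?thesis by (simp only: Zc)
    qed
    moreover have "2 * a * (- ((real D + 1) * real D * real N)) \<le> 2 * a * (\<Sum>x\<in>Zs. real (mu' x) * x)"
      using block_lower a_pos by (intro mult_left_mono) auto
    ultimately have "2 * a * (- ((real D + 1) * real D * real N)) + ln (1 - exp (- a)) * (2 * real N * (real D + 1))
        \<le> (\<Sum>x\<in>Zs. real (mu' x) * (2 * a * x + ln (1 - exp (- a))))"
      by linarith
    then have "exp (2 * a * (- ((real D + 1) * real D * real N)) + ln (1 - exp (- a)) * (2 * real N * (real D + 1)))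
        \<le> exp (\<Sum>x\<in>Zs. real (mu' x) * (2 * a * x + ln (1 - exp (- a))))" by (simp only: exp_le_cancel_iff)
    with \<open>norm (QQ w) \<ge> _\<close> show ?thesis by linarith
  qed

lemma inner_bound:
  assumes hol: "h holomorphic_on Om a n0" and heq: "\<forall>w\<in>Om a n0 - KK. GG a c n0 w = h w * QQ w"
    and w: "norm w = exp (2 * a * (- real n0 - 1/2))"
  shows "norm (w ^ N * h w) \<le> exp (2 * a * (- real n0 - 1/2) * real N + (ln (Kc a B + 1) + a * real n0)
     + (real (2 * n0) * ln 2 - 2 * a * real n0)
     - (2 * a * (- ((real D + 1) * real D * real N)) + ln (1 - exp (- a)) * (2 * real N * (real D + 1))))"
proof -
  have T0lt: "exp (2 * a * (- real n0 - 1/2)) < exp (- 2 * a * real n0)" using a_pos by (simp add: algebra_simps)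
  have wO: "w \<in> Om a n0"
  proof -
    have "exp (2 * a * (- real n0 - 3/4)) < exp (2 * a * (- real n0 - 1/2))" using a_pos by (simp add: algebra_simps)
    moreover have "- real n0 - 1/2 < real n0 - 1/4" using of_nat_0_le_iff[of n0] by linarith
    then have "2 * a * (- real n0 - 1/2) < 2 * a * (real n0 - 1/4)" using a_pos by (intro mult_strict_left_mono) auto
    then have "exp (2 * a * (- real n0 - 1/2)) < exp (2 * a * (real n0 - 1/4))" by simp
    ultimately show ?thesis unfolding mem_Om w by blast
  qed
  have wK: "w \<noteq> EE x" if "x \<in> Zs" for x
  proof
    assume "w = EE x"
    then have "norm w = norm (EE x)" by simp
    then show False using Zs_norm_bounds(1)[OF that] T0lt w by linarith
  qed
  have np: "w + complex_of_real (pk a k) \<noteq> 0" if k: "k \<in> {-int n0..<int n0}" for k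
  proof
    assume "w + complex_of_real (pk a k) = 0"
    then have "norm w = pk a k" using pk_pos[of a k]
      by (metis add_eq_0_iff norm_minus_cancel norm_of_real abs_of_pos)
    moreover have "exp (- 2 * a * real n0) \<le> pk a k"
    proof -
      have "2 * a * (- real n0) \<le> 2 * a * real_of_int k" using k a_pos by (intro mult_left_mono) auto
      then show ?thesis by (simp add: pk_def)
    qed
    ultimately show False using T0lt w by linarith
  qed
  note hf = h_formula[OF hol heq wO wK np]
  have F: "norm (FF a c w) \<le> exp (ln (Kc a B + 1) + a * real n0)"
  proof -
    have "norm w = exp (2 * a * (of_int (- int n0) - 1/2))" using w by simp
    from FF_circle[OF a_pos B_nonneg c_bd this]
    have "norm (FF a c w) \<le> Kc a B * exp (a * real n0)" by (simp add: Kc_def)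
    also have "\<dots> \<le> exp (ln (Kc a B + 1) + a * real n0)" by (rule FF_le_kappa)
    finally show ?thesis .
  qed
  have P: "norm (PP a n0 w) \<le> exp (real (2 * n0) * ln 2 - 2 * a * real n0)"
    by (rule PP_inner[OF a_pos B_nonneg c_bd w])
  have Q: "norm (QQ w) \<ge> exp (2 * a * (- ((real D + 1) * real D * real N)) + ln (1 - exp (- a)) * (2 * real N * (real D + 1)))"
    by (rule Qinner[OF w])
  have Wn: "norm (w ^ N) = exp (2 * a * (- real n0 - 1/2) * real N)"
    by (simp add: norm_power w exp_of_nat_mult[symmetric] mult_ac)
  have "norm (w ^ N * h w) = norm (w ^ N) * (norm (FF a c w) * norm (PP a n0 w) / norm (QQ w))"
    using hf by (simp add: norm_mult norm_divide)
  also have "\<dots> \<le> exp (2 * a * (- real n0 - 1/2) * real N + (ln (Kc a B + 1) + a * real n0)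
     + (real (2 * n0) * ln 2 - 2 * a * real n0)
     - (2 * a * (- ((real D + 1) * real D * real N)) + ln (1 - exp (- a)) * (2 * real N * (real D + 1))))"
    by (rule combine_upper) (use Wn F P Q in auto)
  finally show ?thesis .
qed

lemma star_bound:
  assumes hol: "h holomorphic_on Om a n0" and heq: "\<forall>w\<in>Om a n0 - KK. GG a c n0 w = h w * QQ w"
  shows "norm (EE xs ^ N * h (EE xs)) \<ge> exp (2 * a * xs * real N + ln (norm (FF a c (EE xs)))
     + (a * real n0 * (real n0 - 1) - 4 * a * real n0 * \<bar>xs\<bar>)
     - ((ln 2 + 2 * a * \<bar>xs\<bar>) * (2 * real N * (real D + 1))
        + 2 * a * ((real D + 1) * (real D * (real N * (real N - 1) / 2) + 2 * real N * real D))))"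
proof -
  let ?w = "EE xs"
  have n0x: "\<bar>xs\<bar> + 1 \<le> real n0" using Nbig by (simp add: n0_def)
  have wO: "?w \<in> Om a n0"
  proof -
    have "2 * a * (- real n0 - 3/4) < 2 * a * xs" using a_pos n0x by (intro mult_strict_left_mono) auto
    moreover have "2 * a * xs < 2 * a * (real n0 - 1/4)" using a_pos n0x by (intro mult_strict_left_mono) auto
    ultimately have "exp (2 * a * (- real n0 - 3/4)) < exp (2 * a * xs)" "exp (2 * a * xs) < exp (2 * a * (real n0 - 1/4))"
      by (simp_all only: exp_less_cancel_iff)
    then show ?thesis unfolding mem_Om EE_norm by blast
  qed
  have wK: "?w \<noteq> EE x" if "x \<in> Zs" for x
  proof
    assume "?w = EE x"
    then have "xs = x" using EE_inj by (simp add: inj_eq)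
    then show False using Zs_props(1)[OF that] xs by simp
  qed
  have wre: "Re ?w > 0" by (simp add: EE_def)
  have np: "?w + complex_of_real (pk a k) \<noteq> 0" for k
  proof
    assume "?w + complex_of_real (pk a k) = 0"
    then have "Re (?w + complex_of_real (pk a k)) = 0" by simp
    then show False using wre pk_pos[of a k] by simp
  qed
  note hf = h_formula[OF hol heq wO wK np]
  have Fnz: "FF a c ?w \<noteq> 0" using xs f_eq[of xs] by (auto simp: EE_def)
  have F: "norm (FF a c ?w) \<ge> exp (ln (norm (FF a c ?w)))" using Fnz by simp
  have P: "norm (PP a n0 ?w) \<ge> exp (a * real n0 * (real n0 - 1) - 4 * a * real n0 * \<bar>xs\<bar>)"
    unfolding EE_def by (rule PP_star[OF a_pos B_nonneg c_bd])
  have Q: "norm (QQ ?w) \<le> exp ((ln 2 + 2 * a * \<bar>xs\<bar>) * (2 * real N * (real D + 1))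
        + 2 * a * ((real D + 1) * (real D * (real N * (real N - 1) / 2) + 2 * real N * real D)))"
  proof -
    have "norm (QQ ?w) \<le> exp (\<Sum>x\<in>Zs. real (mu' x) * (ln 2 + 2 * a * \<bar>xs\<bar> + 2 * a * max 0 x))"
      unfolding QQ_def
    proof (rule prod_le_exp[OF Zs_fin], rule pow_le_exp)
      fix x assume x: "x \<in> Zs"
      have "norm (?w - EE x) \<le> norm ?w + norm (EE x)" by (rule norm_triangle_ineq4)
      also have "\<dots> = exp (2 * a * xs) + exp (2 * a * x)" by (simp add: EE_norm)
      also have "\<dots> \<le> 2 * exp (2 * a * \<bar>xs\<bar> + 2 * a * max 0 x)"
      proof -
        have "2 * a * xs \<le> 2 * a * \<bar>xs\<bar> + 2 * a * max 0 x"
        proof -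
          have "2 * a * xs \<le> 2 * a * \<bar>xs\<bar>" using a_pos by (intro mult_left_mono) auto
          moreover have "0 \<le> 2 * a * max 0 x" using a_pos by simp
          ultimately show ?thesis by linarith
        qed
        moreover have "2 * a * x \<le> 2 * a * \<bar>xs\<bar> + 2 * a * max 0 x"
        proof -
          have "2 * a * x \<le> 2 * a * max 0 x" using a_pos by (intro mult_left_mono) auto
          moreover have "0 \<le> 2 * a * \<bar>xs\<bar>" using a_pos by simp
          ultimately show ?thesis by linarith
        qed
        ultimately have "exp (2 * a * xs) \<le> exp (2 * a * \<bar>xs\<bar> + 2 * a * max 0 x)"
            "exp (2 * a * x) \<le> exp (2 * a * \<bar>xs\<bar> + 2 * a * max 0 x)"
          by (simp_all only: exp_le_cancel_iff)
        then show ?thesis by linarith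
      qed
      also have "\<dots> = exp (ln 2 + 2 * a * \<bar>xs\<bar> + 2 * a * max 0 x)" by (simp add: two_exp add.assoc)
      finally show "norm (?w - EE x) \<le> exp (ln 2 + 2 * a * \<bar>xs\<bar> + 2 * a * max 0 x)" .
    qed
    moreover have "(\<Sum>x\<in>Zs. real (mu' x) * (ln 2 + 2 * a * \<bar>xs\<bar> + 2 * a * max 0 x)) =
        (ln 2 + 2 * a * \<bar>xs\<bar>) * (2 * real N * (real D + 1)) + 2 * a * (\<Sum>x\<in>Zs. real (mu' x) * max 0 x)"
    proof -
      have "(\<Sum>x\<in>Zs. real (mu' x) * (ln 2 + 2 * a * \<bar>xs\<bar> + 2 * a * max 0 x)) =
          (\<Sum>x\<in>Zs. (ln 2 + 2 * a * \<bar>xs\<bar>) * real (mu' x) + 2 * a * (real (mu' x) * max 0 x))"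
        by (rule sum.cong[OF refl]) (simp add: distrib_left mult_ac)
      also have "\<dots> = (ln 2 + 2 * a * \<bar>xs\<bar>) * (\<Sum>x\<in>Zs. real (mu' x)) + 2 * a * (\<Sum>x\<in>Zs. real (mu' x) * max 0 x)"
        by (simp only: sum.distrib sum_distrib_left)
      finally show ?thesis by (simp only: Zc)
    qed
    moreover have "2 * a * (\<Sum>x\<in>Zs. real (mu' x) * max 0 x) \<le> 2 * a * ((real D + 1) * (real D * (real N * (real N - 1) / 2) + 2 * real N * real D))"
      using block_upper a_pos by (intro mult_left_mono) auto
    ultimately have "(\<Sum>x\<in>Zs. real (mu' x) * (ln 2 + 2 * a * \<bar>xs\<bar> + 2 * a * max 0 x)) \<le>
        (ln 2 + 2 * a * \<bar>xs\<bar>) * (2 * real N * (real D + 1))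
        + 2 * a * ((real D + 1) * (real D * (real N * (real N - 1) / 2) + 2 * real N * real D))"
      by linarith
    then have "exp (\<Sum>x\<in>Zs. real (mu' x) * (ln 2 + 2 * a * \<bar>xs\<bar> + 2 * a * max 0 x)) \<le>
        exp ((ln 2 + 2 * a * \<bar>xs\<bar>) * (2 * real N * (real D + 1))
        + 2 * a * ((real D + 1) * (real D * (real N * (real N - 1) / 2) + 2 * real N * real D)))"
      by (simp only: exp_le_cancel_iff)
    with \<open>norm (QQ ?w) \<le> _\<close> show ?thesis by linarith
  qed
  have Qpos: "norm (QQ ?w) > 0" using hf(2) by simp
  have Wn: "norm (?w ^ N) \<ge> exp (2 * a * xs * real N)"
    by (simp add: norm_power EE_norm exp_of_nat_mult[symmetric] mult_ac)
  have "exp (2 * a * xs * real N + ln (norm (FF a c (EE xs)))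
     + (a * real n0 * (real n0 - 1) - 4 * a * real n0 * \<bar>xs\<bar>)
     - ((ln 2 + 2 * a * \<bar>xs\<bar>) * (2 * real N * (real D + 1))
        + 2 * a * ((real D + 1) * (real D * (real N * (real N - 1) / 2) + 2 * real N * real D))))
     \<le> norm (?w ^ N) * (norm (FF a c ?w) * norm (PP a n0 ?w) / norm (QQ ?w))"
    by (rule combine_lower[OF Wn F P Qpos Q])
  also have "\<dots> = norm (?w ^ N * h ?w)"
    using hf by (simp add: norm_mult norm_divide)
  finally show ?thesis .
qed


lemma main_contra:
  assumes ineq1: "2 * a * (real n0 - 1/2) * real N + (ln (Kc a B + 1) - a * real n0)
     + real (2 * n0) * (ln 2 + 2 * a * (real n0 - 1/2))
     - (2 * a * (real n0 - 1/2) + ln (1 - exp (- a))) * (2 * real N * (real D + 1))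
     < 2 * a * xs * real N + ln (norm (FF a c (EE xs)))
     + (a * real n0 * (real n0 - 1) - 4 * a * real n0 * \<bar>xs\<bar>)
     - ((ln 2 + 2 * a * \<bar>xs\<bar>) * (2 * real N * (real D + 1))
        + 2 * a * ((real D + 1) * (real D * (real N * (real N - 1) / 2) + 2 * real N * real D)))"
  and ineq2: "2 * a * (- real n0 - 1/2) * real N + (ln (Kc a B + 1) + a * real n0)
     + (real (2 * n0) * ln 2 - 2 * a * real n0)
     - (2 * a * (- ((real D + 1) * real D * real N)) + ln (1 - exp (- a)) * (2 * real N * (real D + 1)))
     < 2 * a * xs * real N + ln (norm (FF a c (EE xs)))
     + (a * real n0 * (real n0 - 1) - 4 * a * real n0 * \<bar>xs\<bar>)
     - ((ln 2 + 2 * a * \<bar>xs\<bar>) * (2 * real N * (real D + 1))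
        + 2 * a * ((real D + 1) * (real D * (real N * (real N - 1) / 2) + 2 * real N * real D)))"
  shows False
proof -
  obtain h where hol: "h holomorphic_on Om a n0" and heq: "\<forall>w\<in>Om a n0 - KK. GG a c n0 w = h w * QQ w"
    using exists_h by blast
  define U1 where "U1 = 2 * a * (real n0 - 1/2) * real N + (ln (Kc a B + 1) - a * real n0)
     + real (2 * n0) * (ln 2 + 2 * a * (real n0 - 1/2))
     - (2 * a * (real n0 - 1/2) + ln (1 - exp (- a))) * (2 * real N * (real D + 1))"
  define U0 where "U0 = 2 * a * (- real n0 - 1/2) * real N + (ln (Kc a B + 1) + a * real n0)
     + (real (2 * n0) * ln 2 - 2 * a * real n0)
     - (2 * a * (- ((real D + 1) * real D * real N)) + ln (1 - exp (- a)) * (2 * real N * (real D + 1)))"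
  define L where "L = 2 * a * xs * real N + ln (norm (FF a c (EE xs)))
     + (a * real n0 * (real n0 - 1) - 4 * a * real n0 * \<bar>xs\<bar>)
     - ((ln 2 + 2 * a * \<bar>xs\<bar>) * (2 * real N * (real D + 1))
        + 2 * a * ((real D + 1) * (real D * (real N * (real N - 1) / 2) + 2 * real N * real D)))"
  define T1 where "T1 = exp (2 * a * (real n0 - 1/2))"
  define T0 where "T0 = exp (2 * a * (- real n0 - 1/2))"
  define A where "A = cball (0::complex) T1 - ball 0 T0"
  define Hf where "Hf w = w ^ N * h w" for w
  have n0x: "\<bar>xs\<bar> + 1 \<le> real n0" using Nbig by (simp add: n0_def)
  have r1: "exp (2 * a * (- real n0 - 3/4)) < T0"
    unfolding T0_def using a_pos by (simp only: exp_less_cancel_iff) (intro mult_strict_left_mono, auto)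
  have r2: "T1 < exp (2 * a * (real n0 - 1/4))"
    unfolding T1_def using a_pos by (simp only: exp_less_cancel_iff) (intro mult_strict_left_mono, auto)
  have AOm: "A \<subseteq> Om a n0"
  proof
    fix w assume "w \<in> A"
    then have "T0 \<le> norm w" "norm w \<le> T1" by (auto simp: A_def)
    then show "w \<in> Om a n0" unfolding mem_Om using r1 r2 by linarith
  qed
  have Hhol: "Hf holomorphic_on Om a n0"
    unfolding Hf_def by (intro holomorphic_intros hol)
  have clA: "closed A" unfolding A_def by (intro closed_Diff) auto
  have xsA: "EE xs \<in> A"
  proof -
    have "2 * a * (- real n0 - 1/2) \<le> 2 * a * xs" using a_pos n0x by (intro mult_left_mono) auto
    moreover have "2 * a * xs \<le> 2 * a * (real n0 - 1/2)" using a_pos n0x by (intro mult_left_mono) auto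
    ultimately have "T0 \<le> exp (2 * a * xs)" "exp (2 * a * xs) \<le> T1"
      unfolding T0_def T1_def by (simp_all only: exp_le_cancel_iff)
    then show ?thesis by (simp add: A_def EE_norm)
  qed
  have fr: "norm z = T1 \<or> norm z = T0" if z: "z \<in> frontier A" for z
  proof -
    have zA: "z \<in> A" using z clA by (simp add: frontier_def)
    have zi: "z \<notin> interior A" using z by (simp add: frontier_def)
    have "ball 0 T1 - cball 0 T0 \<subseteq> interior A"
      by (rule interior_maximal) (auto simp: A_def)
    then have "\<not> (norm z < T1 \<and> norm z > T0)" using zi by auto
    moreover have "T0 \<le> norm z" "norm z \<le> T1" using zA by (auto simp: A_def)
    ultimately show ?thesis by linarith
  qed
  have bd: "norm (Hf z) \<le> exp (max U1 U0)" if z: "z \<in> frontier A" for z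
  proof (cases "norm z = T1")
    case True
    have "norm (Hf z) \<le> exp U1"
      unfolding Hf_def U1_def by (rule outer_bound[OF hol heq]) (use True in \<open>simp add: T1_def\<close>)
    also have "\<dots> \<le> exp (max U1 U0)" by simp
    finally show ?thesis .
  next
    case False
    then have "norm z = T0" using fr[OF z] by blast
    then have "norm (Hf z) \<le> exp U0"
      unfolding Hf_def U0_def by (intro inner_bound[OF hol heq]) (simp add: T0_def)
    also have "\<dots> \<le> exp (max U1 U0)" by simp
    finally show ?thesis .
  qed
  have up: "norm (Hf (EE xs)) \<le> exp (max U1 U0)"
  proof (rule maximum_modulus_frontier[of Hf A "exp (max U1 U0)" "EE xs"])
    show "Hf holomorphic_on interior A"
      using AOm interior_subset by (intro holomorphic_on_subset[OF Hhol]) blast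
    show "continuous_on (closure A) Hf"
      using clA AOm by (intro holomorphic_on_imp_continuous_on holomorphic_on_subset[OF Hhol]) (simp add: closure_closed)
    show "bounded A" unfolding A_def by (rule bounded_subset[OF bounded_cball]) auto
  qed (use bd xsA in auto)
  have lo: "exp L \<le> norm (Hf (EE xs))"
    unfolding Hf_def L_def by (rule star_bound[OF hol heq])
  have "L \<le> max U1 U0" using order.trans[OF lo up] by simp
  moreover have "U1 < L" "U0 < L" using ineq1 ineq2 unfolding U1_def U0_def L_def by simp_all
  ultimately show False by linarith
qed


lemma main_contra':
  assumes ineq1: "2 * a * ((real N * real D) - 1/2) * real N + (ln (Kc a B + 1) - a * (real N * real D))
     + (2 * (real N * real D)) * (ln 2 + 2 * a * ((real N * real D) - 1/2))
     - (2 * a * ((real N * real D) - 1/2) + ln (1 - exp (- a))) * (2 * real N * (real D + 1))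
     < 2 * a * xs * real N + ln (norm (FF a c (complex_of_real (exp (2 * a * xs)))))
     + (a * (real N * real D) * ((real N * real D) - 1) - 4 * a * (real N * real D) * \<bar>xs\<bar>)
     - ((ln 2 + 2 * a * \<bar>xs\<bar>) * (2 * real N * (real D + 1))
        + 2 * a * ((real D + 1) * (real D * (real N * (real N - 1) / 2) + 2 * real N * real D)))"
  and ineq2: "2 * a * (- (real N * real D) - 1/2) * real N + (ln (Kc a B + 1) + a * (real N * real D))
     + ((2 * (real N * real D)) * ln 2 - 2 * a * (real N * real D))
     - (2 * a * (- ((real D + 1) * real D * real N)) + ln (1 - exp (- a)) * (2 * real N * (real D + 1)))
     < 2 * a * xs * real N + ln (norm (FF a c (complex_of_real (exp (2 * a * xs)))))
     + (a * (real N * real D) * ((real N * real D) - 1) - 4 * a * (real N * real D) * \<bar>xs\<bar>)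
     - ((ln 2 + 2 * a * \<bar>xs\<bar>) * (2 * real N * (real D + 1))
        + 2 * a * ((real D + 1) * (real D * (real N * (real N - 1) / 2) + 2 * real N * real D)))"
  shows False
  by (rule main_contra) (use assms in \<open>simp_all add: n0_def EE_def\<close>)

end

lemma poly_pos:
  fixes \<alpha> \<beta> \<gamma> :: real
  assumes al: "\<alpha> > 0"
  shows "\<exists>N0::nat. \<forall>N\<ge>N0. \<alpha> * real N ^ 2 + \<beta> * real N + \<gamma> > 0"
proof -
  define M where "M = (\<bar>\<beta>\<bar> + \<bar>\<gamma>\<bar> + 1) / \<alpha>"
  obtain N0 :: nat where N0: "M \<le> real N0" "1 \<le> real N0"
  proof -
    obtain n :: nat where "M \<le> real n" using real_arch_simple by blast
    then show ?thesis by (intro that[of "n + 1"]) auto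
  qed
  have "\<alpha> * real N ^ 2 + \<beta> * real N + \<gamma> > 0" if N: "N \<ge> N0" for N
  proof -
    have N1: "real N \<ge> 1" "real N \<ge> M" using N N0 by auto
    have "\<alpha> * real N \<ge> \<alpha> * M" using N1 al by (intro mult_left_mono) auto
    also have "\<alpha> * M = \<bar>\<beta>\<bar> + \<bar>\<gamma>\<bar> + 1" using al by (simp add: M_def)
    finally have h1: "\<alpha> * real N \<ge> \<bar>\<beta>\<bar> + \<bar>\<gamma>\<bar> + 1" .
    have "\<alpha> * real N ^ 2 = (\<alpha> * real N) * real N" by (simp add: power2_eq_square)
    also have "\<dots> \<ge> (\<bar>\<beta>\<bar> + \<bar>\<gamma>\<bar> + 1) * real N" using h1 N1 by (intro mult_right_mono) auto
    finally have h2: "\<alpha> * real N ^ 2 \<ge> (\<bar>\<beta>\<bar> + \<bar>\<gamma>\<bar> + 1) * real N" .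
    have h3: "(\<bar>\<beta>\<bar> + \<bar>\<gamma>\<bar> + 1) * real N = \<bar>\<beta>\<bar> * real N + \<bar>\<gamma>\<bar> * real N + real N"
      by (simp add: distrib_right)
    have h4: "\<bar>\<gamma>\<bar> * real N \<ge> \<bar>\<gamma>\<bar>" using N1 by (simp add: mult_le_cancel_left1)
    have h5: "\<beta> * real N \<ge> - (\<bar>\<beta>\<bar> * real N)"
    proof -
      have "- \<bar>\<beta>\<bar> * real N \<le> \<beta> * real N" using N1 by (intro mult_right_mono) auto
      then show ?thesis by simp
    qed
    have h6: "\<gamma> \<ge> - \<bar>\<gamma>\<bar>" by simp
    show ?thesis using h2 h3 h4 h5 h6 N1 by linarith
  qed
  then show ?thesis by blast
qed

lemma poly_exists:
  fixes a K P T X :: real and D :: nat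
  assumes a: "a > 0" and D: "D \<ge> 1"
  shows "\<exists>N::nat. \<bar>X\<bar> + 1 \<le> real N * real D \<and>
    2 * a * ((real N * real D) - 1/2) * real N + (K - a * (real N * real D))
     + (2 * (real N * real D)) * (ln 2 + 2 * a * ((real N * real D) - 1/2))
     - (2 * a * ((real N * real D) - 1/2) + T) * (2 * real N * (real D + 1))
     < 2 * a * X * real N + P
     + (a * (real N * real D) * ((real N * real D) - 1) - 4 * a * (real N * real D) * \<bar>X\<bar>)
     - ((ln 2 + 2 * a * \<bar>X\<bar>) * (2 * real N * (real D + 1))
        + 2 * a * ((real D + 1) * (real D * (real N * (real N - 1) / 2) + 2 * real N * real D))) \<and>
    2 * a * (- (real N * real D) - 1/2) * real N + (K + a * (real N * real D))
     + ((2 * (real N * real D)) * ln 2 - 2 * a * (real N * real D))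
     - (2 * a * (- ((real D + 1) * real D * real N)) + T * (2 * real N * (real D + 1)))
     < 2 * a * X * real N + P
     + (a * (real N * real D) * ((real N * real D) - 1) - 4 * a * (real N * real D) * \<bar>X\<bar>)
     - ((ln 2 + 2 * a * \<bar>X\<bar>) * (2 * real N * (real D + 1))
        + 2 * a * ((real D + 1) * (real D * (real N * (real N - 1) / 2) + 2 * real N * real D)))"
proof -
  define dd where "dd = real D"
  define Lb where "Lb = 2 * a * X - a * dd - 4 * a * dd * \<bar>X\<bar> - 2 * (dd + 1) * (ln 2 + 2 * a * \<bar>X\<bar>) - 3 * a * dd * (dd + 1)"
  define b1 where "b1 = Lb - (a - a * dd + 2 * dd * ln 2 - 2 * T * (dd + 1))"
  define b0 where "b0 = Lb - (- a - a * dd + 2 * dd * ln 2 + 2 * a * dd * (dd + 1) - 2 * T * (dd + 1))"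
  have al: "a * dd > 0" using a D by (simp add: dd_def)
  obtain N1 where N1: "\<And>N. N \<ge> N1 \<Longrightarrow> a * dd * real N ^ 2 + b1 * real N + (P - K) > 0"
    using poly_pos[OF al] by blast
  obtain N2 where N2: "\<And>N. N \<ge> N2 \<Longrightarrow> a * dd * real N ^ 2 + b0 * real N + (P - K) > 0"
    using poly_pos[OF al] by blast
  obtain N3 :: nat where N3: "\<bar>X\<bar> + 1 \<le> real N3" using real_arch_simple by blast
  define N where "N = max N1 (max N2 N3)"
  have id1: "(2 * a * X * real N + P
     + (a * (real N * dd) * ((real N * dd) - 1) - 4 * a * (real N * dd) * \<bar>X\<bar>)
     - ((ln 2 + 2 * a * \<bar>X\<bar>) * (2 * real N * (dd + 1))
        + 2 * a * ((dd + 1) * (dd * (real N * (real N - 1) / 2) + 2 * real N * dd))))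
     - (2 * a * ((real N * dd) - 1/2) * real N + (K - a * (real N * dd))
     + (2 * (real N * dd)) * (ln 2 + 2 * a * ((real N * dd) - 1/2))
     - (2 * a * ((real N * dd) - 1/2) + T) * (2 * real N * (dd + 1)))
     = a * dd * real N ^ 2 + b1 * real N + (P - K)"
    unfolding b1_def Lb_def by (simp add: algebra_simps power2_eq_square) (simp add: field_simps)
  have id0: "(2 * a * X * real N + P
     + (a * (real N * dd) * ((real N * dd) - 1) - 4 * a * (real N * dd) * \<bar>X\<bar>)
     - ((ln 2 + 2 * a * \<bar>X\<bar>) * (2 * real N * (dd + 1))
        + 2 * a * ((dd + 1) * (dd * (real N * (real N - 1) / 2) + 2 * real N * dd))))
     - (2 * a * (- (real N * dd) - 1/2) * real N + (K + a * (real N * dd))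
     + ((2 * (real N * dd)) * ln 2 - 2 * a * (real N * dd))
     - (2 * a * (- ((dd + 1) * dd * real N)) + T * (2 * real N * (dd + 1))))
     = a * dd * real N ^ 2 + b0 * real N + (P - K)"
    unfolding b0_def Lb_def by (simp add: algebra_simps power2_eq_square) (simp add: field_simps)
  have p1: "a * dd * real N ^ 2 + b1 * real N + (P - K) > 0" using N1 by (simp add: N_def)
  have p0: "a * dd * real N ^ 2 + b0 * real N + (P - K) > 0" using N2 by (simp add: N_def)
  have nb: "\<bar>X\<bar> + 1 \<le> real N * dd"
  proof -
    have "real N3 \<le> real N" by (simp add: N_def)
    moreover have "real N * 1 \<le> real N * dd" using D unfolding dd_def by (intro mult_left_mono) auto
    ultimately show ?thesis using N3 by linarith
  qed
  show ?thesis
    apply (rule exI[of _ N])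
    using nb id1 id0 p1 p0 unfolding dd_def by linarith
qed

theorem theorem4p6:
  fixes a :: real and c :: "int \<Rightarrow> complex" and f :: "real \<Rightarrow> complex"
  assumes "a > 0"
    and "bounded (range c)"
    and "\<And>x. f x = (\<Sum>\<^sub>\<infinity>k\<in>(UNIV::int set). c k * complex_of_real (sech_kernel a (x - of_int k)))"
    and "\<exists>x. f x \<noteq> 0"
  shows "lower_density {x. f x = 0} (zero_mult f) \<le> 1"
proof (rule ccontr)
  assume nle: "\<not> lower_density {x. f x = 0} (zero_mult f) \<le> 1"
  have a_pos: "a > 0" using assms(1) .
  obtain B where B: "\<forall>z\<in>range c. norm z \<le> B" using assms(2) bounded_iff by blast
  have c_bd: "\<And>k. norm (c k) \<le> B" using B by auto
  have B_nonneg: "B \<ge> 0" using c_bd[of 0] norm_ge_zero[of "c 0"] by linarith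
  have f_eq: "\<And>x. f x = 2 * complex_of_real (exp (a * x)) * FF a c (complex_of_real (exp (2 * a * x)))"
    using f_eq_FF[OF a_pos B_nonneg c_bd assms(3)] .
  have "ereal 1 < lower_density {x. f x = 0} (zero_mult f)" using nle by (simp add: not_le one_ereal_def)
  then obtain y where y1: "ereal 1 < ereal y" and yl: "ereal y < lower_density {x. f x = 0} (zero_mult f)"
    using ereal_dense2 by blast
  have y1': "1 < y" using y1 by simp
  have ev: "\<forall>\<^sub>F r in at_top. ereal y < (INF x. ereal ((\<Sum>z\<in>{x. f x = 0} \<inter> {x - r..x + r}. real (zero_mult f z)) / (2 * r)))"
    using less_LiminfD[OF yl[unfolded lower_density_def]] .
  then obtain R0 where R0: "\<And>r. r \<ge> R0 \<Longrightarrow> ereal y < (INF x. ereal ((\<Sum>z\<in>{x. f x = 0} \<inter> {x - r..x + r}. real (zero_mult f z)) / (2 * r)))"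
    unfolding eventually_at_top_linorder by blast
  have dens: "y < (\<Sum>z\<in>{x. f x = 0} \<inter> {x - r..x + r}. real (zero_mult f z)) / (2 * r)" if "r \<ge> R0" for r x
    using less_INF_D[OF R0[OF that], of x] by simp
  define m where "m = max (2 * R0 + 1) (2 / (y - 1) + 1)"
  define D where "D = nat \<lceil>m\<rceil> + 2"
  have Dm: "real D \<ge> m + 2"
  proof -
    have "real (nat \<lceil>m\<rceil>) \<ge> m" by linarith
    then show ?thesis by (simp add: D_def)
  qed
  have D2: "D \<ge> 2" by (simp add: D_def)
  have D1: "D \<ge> 1" using D2 by simp
  have Dr: "(real D - 1) / 2 \<ge> R0" using Dm by (simp add: m_def)
  have Dy: "y * (real D - 1) \<ge> real D + 1"
  proof -
    have "real D - 1 \<ge> 2 / (y - 1)" using Dm by (simp add: m_def)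
    then have "(y - 1) * (real D - 1) \<ge> (y - 1) * (2 / (y - 1))" using y1' by (intro mult_left_mono) auto
    also have "(y - 1) * (2 / (y - 1)) = 2" using y1' by (simp add: field_simps)
    finally have "(y - 1) * (real D - 1) \<ge> 2" .
    then show ?thesis by (simp add: algebra_simps)
  qed
  define W where "W j = {x. f x = 0} \<inter> {real_of_int j * real D .. real_of_int j * real D + real D - 1}" for j
  have blk: "finite (W j) \<and> D + 1 \<le> sum (zero_mult f) (W j)" for j
  proof -
    define r where "r = (real D - 1) / 2"
    define x0 where "x0 = real_of_int j * real D + r"
    have r: "r \<ge> R0" "r > 0" using Dr D2 by (auto simp: r_def)
    have eqs: "{x0 - r..x0 + r} = {real_of_int j * real D .. real_of_int j * real D + real D - 1}"
      by (simp add: x0_def r_def)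
    have "y < (\<Sum>z\<in>W j. real (zero_mult f z)) / (2 * r)"
      using dens[OF r(1), of x0] unfolding eqs W_def .
    then have S: "y * (2 * r) < (\<Sum>z\<in>W j. real (zero_mult f z))"
      using r by (simp add: pos_less_divide_eq)
    have "2 * r = real D - 1" by (simp add: r_def)
    then have "y * (2 * r) \<ge> real D + 1" using Dy by simp
    then have S2: "(\<Sum>z\<in>W j. real (zero_mult f z)) > real D + 1" using S by linarith
    have fin: "finite (W j)"
    proof (rule ccontr)
      assume "infinite (W j)"
      then have "(\<Sum>z\<in>W j. real (zero_mult f z)) = 0" by simp
      then show False using S2 by simp
    qed
    have "real (sum (zero_mult f) (W j)) > real D + 1" using S2 by (simp add: of_nat_sum)
    then have "sum (zero_mult f) (W j) > D + 1" by linarith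
    then show ?thesis using fin by simp
  qed
  have "\<forall>j. \<exists>\<mu>. (\<forall>x. \<mu> x \<le> zero_mult f x) \<and> (\<forall>x. x \<notin> W j \<longrightarrow> \<mu> x = 0) \<and> sum \<mu> (W j) = D + 1"
    using select_sub blk by blast
  then obtain \<mu> where mu: "\<And>j. (\<forall>x. \<mu> j x \<le> zero_mult f x) \<and> (\<forall>x. x \<notin> W j \<longrightarrow> \<mu> j x = 0) \<and> sum (\<mu> j) (W j) = D + 1"
    by metis
  have W_sub: "\<And>j. W j \<subseteq> {x. f x = 0} \<inter> {real_of_int j * real D .. real_of_int j * real D + real D - 1}"
    by (simp add: W_def)
  have W_fin: "\<And>j. finite (W j)" using blk by blast
  have mu_le: "\<And>j x. \<mu> j x \<le> zero_mult f x" using mu by blast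
  have mu_out: "\<And>j x. x \<notin> W j \<Longrightarrow> \<mu> j x = 0" using mu by blast
  have mu_sum: "\<And>j. sum (\<mu> j) (W j) = D + 1" using mu by blast
  obtain xs where xs: "f xs \<noteq> 0" using assms(4) by blast
  obtain N where Nbig: "\<bar>xs\<bar> + 1 \<le> real N * real D"
    and ineq1: "2 * a * ((real N * real D) - 1/2) * real N + (ln (Kc a B + 1) - a * (real N * real D))
     + (2 * (real N * real D)) * (ln 2 + 2 * a * ((real N * real D) - 1/2))
     - (2 * a * ((real N * real D) - 1/2) + ln (1 - exp (- a))) * (2 * real N * (real D + 1))
     < 2 * a * xs * real N + ln (norm (FF a c (complex_of_real (exp (2 * a * xs)))))
     + (a * (real N * real D) * ((real N * real D) - 1) - 4 * a * (real N * real D) * \<bar>xs\<bar>)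
     - ((ln 2 + 2 * a * \<bar>xs\<bar>) * (2 * real N * (real D + 1))
        + 2 * a * ((real D + 1) * (real D * (real N * (real N - 1) / 2) + 2 * real N * real D)))"
    and ineq2: "2 * a * (- (real N * real D) - 1/2) * real N + (ln (Kc a B + 1) + a * (real N * real D))
     + ((2 * (real N * real D)) * ln 2 - 2 * a * (real N * real D))
     - (2 * a * (- ((real D + 1) * real D * real N)) + ln (1 - exp (- a)) * (2 * real N * (real D + 1)))
     < 2 * a * xs * real N + ln (norm (FF a c (complex_of_real (exp (2 * a * xs)))))
     + (a * (real N * real D) * ((real N * real D) - 1) - 4 * a * (real N * real D) * \<bar>xs\<bar>)
     - ((ln 2 + 2 * a * \<bar>xs\<bar>) * (2 * real N * (real D + 1))
        + 2 * a * ((real D + 1) * (real D * (real N * (real N - 1) / 2) + 2 * real N * real D)))"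
    using poly_exists[OF a_pos D1, where K = "ln (Kc a B + 1)" and P = "ln (norm (FF a c (complex_of_real (exp (2 * a * xs)))))"
        and T = "ln (1 - exp (- a))" and X = xs] by blast
  show False
    by (rule main_contra'[OF a_pos B_nonneg c_bd f_eq D2 W_sub W_fin mu_le mu_out mu_sum xs Nbig ineq1 ineq2])
qed


end
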